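(* Let $r\ge3$, $n>r$ and $1<i<r$. Let $M=(E_{r-1}E_{r-2}\cdots E_1)(E_{r+1}E_{r+2}\cdots E_n)1_\omega\in T$. Then $(vF_{i-1}E_{i-1}-1)M=M(vF_iE_i-1)$ in $T$.
   Context: $T$ is the $\mathbb{Q}(v)$-algebra with generators $E_i,F_i,K_i^{\pm1}$ ($1\le i\le n$, indices mod $n$) and relations: $K_iK_j=K_jK_i$; $K_iK_i^{-1}=K_i^{-1}K_i=1$; $K_iE_j=v^{\epsilon^+(i,j)}E_jK_i$; $K_iF_j=v^{-\epsilon^+(i,j)}F_jK_i$ ($\epsilon^+(i,j)=1$ if $j=i$, $-1$ if $j\equiv i-1\pmod n$, $0$ otherwise); $E_iF_j-F_jE_i=\delta_{ij}\frac{K_iK_{i+1}^{-1}-K_i^{-1}K_{i+1}}{v-v^{-1}}$; $E_iE_j=E_jE_i$, $F_iF_j=F_jF_i$ if $i-j\not\equiv\pm1$; $E_i^2E_j-(v+v^{-1})E_iE_jE_i+E_jE_i^2=0$, $F_i^2F_j-(v+v^{-1})F_iF_jF_i+F_jF_i^2=0$ if $i-j\equiv\pm1\pmod n$; $K_1\cdots K_n=v^r$; $\prod_{j=0}^r(K_i-v^j)=0$. For a composition $\lambda$ of $r$ into $n$ nonnegative parts, $1_\lambda=\prod_{i=1}^n\prod_{s=1}^{\lambda_i}\frac{K_iv^{-s+1}-K_i^{-1}v^{s-1}}{v^s-v^{-s}}$; $\omega=(1,\dots,1,0,\dots,0)$ with $r$ ones and $n-r$ zeros. *)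

theory Defs
  imports "HOL-Computational_Algebra.Polynomial" "HOL-Computational_Algebra.Fraction_Field"
begin

type_synonym qv = "rat poly fract"

definition vv :: qv where "vv = Fract [:0, 1:] 1"

definition vpow :: "int \<Rightarrow> qv" where
  "vpow e = (if 0 \<le> e then vv ^ nat e else inverse vv ^ nat (- e))"

text \<open>Generators of the free algebra; indices are meant to lie in {1..n}.\<close>
datatype gen = GE nat | GF nat | GK nat | GKi nat

text \<open>Free associative Q(v)-algebra on gen: coefficient functions on words.
  (Elements arising below all have finite support.)\<close>
type_synonym fa = "gen list \<Rightarrow> qv"

definition fa_add :: "fa \<Rightarrow> fa \<Rightarrow> fa" where "fa_add p q = (\<lambda>w. p w + q w)"
definition fa_diff :: "fa \<Rightarrow> fa \<Rightarrow> fa" where "fa_diff p q = (\<lambda>w. p w - q w)"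
definition fa_smult :: "qv \<Rightarrow> fa \<Rightarrow> fa" where "fa_smult c p = (\<lambda>w. c * p w)"
definition fa_mult :: "fa \<Rightarrow> fa \<Rightarrow> fa" where
  "fa_mult p q = (\<lambda>w. \<Sum>k\<in>{0..length w}. p (take k w) * q (drop k w))"
definition fa_mono :: "gen list \<Rightarrow> fa" where "fa_mono u = (\<lambda>w. if w = u then 1 else 0)"
definition fa_const :: "qv \<Rightarrow> fa" where "fa_const c = fa_smult c (fa_mono [])"
definition fa_prod :: "fa list \<Rightarrow> fa" where "fa_prod xs = foldr fa_mult xs (fa_mono [])"

abbreviation "Eg i \<equiv> fa_mono [GE i]"
abbreviation "Fg i \<equiv> fa_mono [GF i]"
abbreviation "Kg i \<equiv> fa_mono [GK i]"
abbreviation "Kig i \<equiv> fa_mono [GKi i]"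

definition wrap :: "nat \<Rightarrow> int \<Rightarrow> nat" where
  "wrap n j = nat ((j - 1) mod int n) + 1"

definition epsp :: "nat \<Rightarrow> nat \<Rightarrow> nat \<Rightarrow> int" where
  "epsp n i j = (if j = i then 1 else if j = wrap n (int i - 1) then -1 else 0)"

definition adj :: "nat \<Rightarrow> nat \<Rightarrow> nat \<Rightarrow> bool" where
  "adj n i j \<longleftrightarrow> j = wrap n (int i + 1) \<or> j = wrap n (int i - 1)"

definition Trels :: "nat \<Rightarrow> nat \<Rightarrow> fa set" where
  "Trels n r =
    {fa_diff (fa_mult (Kg i) (Kg j)) (fa_mult (Kg j) (Kg i)) | i j. i \<in> {1..n} \<and> j \<in> {1..n}}
  \<union> {fa_diff (fa_mult (Kg i) (Kig i)) (fa_mono []) | i. i \<in> {1..n}}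
  \<union> {fa_diff (fa_mult (Kig i) (Kg i)) (fa_mono []) | i. i \<in> {1..n}}
  \<union> {fa_diff (fa_mult (Kg i) (Eg j)) (fa_smult (vpow (epsp n i j)) (fa_mult (Eg j) (Kg i)))
       | i j. i \<in> {1..n} \<and> j \<in> {1..n}}
  \<union> {fa_diff (fa_mult (Kg i) (Fg j)) (fa_smult (vpow (- epsp n i j)) (fa_mult (Fg j) (Kg i)))
       | i j. i \<in> {1..n} \<and> j \<in> {1..n}}
  \<union> {fa_diff (fa_diff (fa_mult (Eg i) (Fg j)) (fa_mult (Fg j) (Eg i)))
       (if i = j then fa_smult (inverse (vv - inverse vv))
           (fa_diff (fa_mult (Kg i) (Kig (wrap n (int i + 1))))
                    (fa_mult (Kig i) (Kg (wrap n (int i + 1)))))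
        else (\<lambda>_. 0))
       | i j. i \<in> {1..n} \<and> j \<in> {1..n}}
  \<union> {fa_diff (fa_mult (Eg i) (Eg j)) (fa_mult (Eg j) (Eg i))
       | i j. i \<in> {1..n} \<and> j \<in> {1..n} \<and> \<not> adj n i j}
  \<union> {fa_diff (fa_mult (Fg i) (Fg j)) (fa_mult (Fg j) (Fg i))
       | i j. i \<in> {1..n} \<and> j \<in> {1..n} \<and> \<not> adj n i j}
  \<union> {fa_add (fa_diff (fa_prod [Eg i, Eg i, Eg j]) (fa_smult (vv + inverse vv) (fa_prod [Eg i, Eg j, Eg i])))
        (fa_prod [Eg j, Eg i, Eg i])
       | i j. i \<in> {1..n} \<and> j \<in> {1..n} \<and> adj n i j}
  \<union> {fa_add (fa_diff (fa_prod [Fg i, Fg i, Fg j]) (fa_smult (vv + inverse vv) (fa_prod [Fg i, Fg j, Fg i])))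
        (fa_prod [Fg j, Fg i, Fg i])
       | i j. i \<in> {1..n} \<and> j \<in> {1..n} \<and> adj n i j}
  \<union> {fa_diff (fa_prod (map Kg [1..<n+1])) (fa_const (vv ^ r))}
  \<union> {fa_prod (map (\<lambda>j. fa_diff (Kg i) (fa_const (vv ^ j))) [0..<r+1]) | i. i \<in> {1..n}}"

inductive_set Tideal :: "nat \<Rightarrow> nat \<Rightarrow> fa set" for n r where
  rel: "x \<in> Trels n r \<Longrightarrow> x \<in> Tideal n r"
| add: "x \<in> Tideal n r \<Longrightarrow> y \<in> Tideal n r \<Longrightarrow> fa_add x y \<in> Tideal n r"
| smult: "x \<in> Tideal n r \<Longrightarrow> fa_smult c x \<in> Tideal n r"
| mult: "x \<in> Tideal n r \<Longrightarrow> fa_mult (fa_mult (fa_mono a) x) (fa_mono b) \<in> Tideal n r"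

definition T_eq :: "nat \<Rightarrow> nat \<Rightarrow> fa \<Rightarrow> fa \<Rightarrow> bool" where
  "T_eq n r p q \<longleftrightarrow> fa_diff p q \<in> Tideal n r"

definition one_factor :: "nat \<Rightarrow> nat \<Rightarrow> fa" where
  "one_factor i s = fa_smult (inverse (vv ^ s - inverse vv ^ s))
     (fa_diff (fa_smult (inverse vv ^ (s - 1)) (Kg i)) (fa_smult (vv ^ (s - 1)) (Kig i)))"

definition one_lam :: "nat \<Rightarrow> (nat \<Rightarrow> nat) \<Rightarrow> fa" where
  "one_lam n lam = fa_prod (concat (map (\<lambda>i. map (one_factor i) [1..<lam i + 1]) [1..<n+1]))"

definition omega :: "nat \<Rightarrow> nat \<Rightarrow> nat" where
  "omega r i = (if 1 \<le> i \<and> i \<le> r then 1 else 0)"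

end

theory Submission
  imports Defs "HOL-Library.Function_Algebras"
begin

lemma fa_mult_Nil: "fa_mult p q [] = p [] * q []"
  by (simp add: fa_mult_def)

lemma fa_mult_Cons: "fa_mult p q (a#w) = p [] * q (a#w) + fa_mult (\<lambda>u. p (a#u)) q w"
  unfolding fa_mult_def by (simp only: length_Cons sum.atLeast0_atMost_Suc_shift) simp

lemma fa_mult_addL: "fa_mult (\<lambda>u. f u + g u) s w = fa_mult f s w + fa_mult g s w"
  unfolding fa_mult_def by (simp add: distrib_right sum.distrib)

lemma fa_mult_smultL: "fa_mult (\<lambda>u. c * f u) s w = c * fa_mult f s w"
  unfolding fa_mult_def by (simp add: sum_distrib_left mult.assoc)

lemma fa_mult_assoc_pt: "fa_mult (fa_mult p q) s w = fa_mult p (fa_mult q s) w"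
proof (induction w arbitrary: p q s)
  case Nil
  then show ?case by (simp add: fa_mult_Nil)
next
  case (Cons a w)
  have e: "(\<lambda>u. fa_mult p q (a#u)) = (\<lambda>u. p [] * q (a#u) + fa_mult (\<lambda>u. p (a#u)) q u)"
    by (simp add: fa_mult_Cons)
  have e2: "(\<lambda>u. fa_mult q s (a#u)) = (\<lambda>u. q [] * s (a#u) + fa_mult (\<lambda>u. q (a#u)) s u)"
    by (simp add: fa_mult_Cons)
  show ?case
    apply (simp add: fa_mult_Cons e e2 fa_mult_addL fa_mult_smultL Cons.IH fa_mult_Nil)
    apply (simp add: fa_mult_def algebra_simps sum_distrib_left)
    done
qed

lemma fa_mult_assoc: "fa_mult (fa_mult p q) s = fa_mult p (fa_mult q s)"
  using fa_mult_assoc_pt by blast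

lemma fa_mult_distL: "fa_mult p (\<lambda>w. q w + s w) = (\<lambda>w. fa_mult p q w + fa_mult p s w)"
  unfolding fa_mult_def by (auto simp: distrib_left sum.distrib)

lemma fa_mult_distR: "fa_mult (\<lambda>w. q w + s w) p = (\<lambda>w. fa_mult q p w + fa_mult s p w)"
  unfolding fa_mult_def by (auto simp: distrib_right sum.distrib)

lemma fa_mult_oneL: "fa_mult (fa_mono []) p = p"
proof
  fix w
  show "fa_mult (fa_mono []) p w = p w"
    unfolding fa_mult_def fa_mono_def
    by (simp add: sum.atLeast_Suc_atMost[of 0] del: sum.atLeast0_atMost_Suc)
qed

lemma fa_mult_oneR: "fa_mult p (fa_mono []) = p"
proof
  fix w
  have "fa_mult p (fa_mono []) w = (\<Sum>k\<in>{0..length w}. if k = length w then p w else 0)"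
    unfolding fa_mult_def fa_mono_def by (rule sum.cong) auto
  then show "fa_mult p (fa_mono []) w = p w" by simp
qed

lemma fa_mult_mono: "fa_mult (fa_mono u) (fa_mono v) = fa_mono (u @ v)"
proof
  fix w
  show "fa_mult (fa_mono u) (fa_mono v) w = fa_mono (u @ v) w"
  proof (cases "w = u @ v")
    case True
    have "fa_mult (fa_mono u) (fa_mono v) w = (\<Sum>k\<in>{0..length w}. if k = length u then 1 else 0)"
      unfolding fa_mult_def fa_mono_def True
    proof (rule sum.cong)
      fix k assume "k \<in> {0..length (u @ v)}"
      then have kl: "k \<le> length (u @ v)" by simp
      have "(take k (u @ v) = u \<and> drop k (u @ v) = v) \<longleftrightarrow> k = length u"
      proof
        assume "take k (u @ v) = u \<and> drop k (u @ v) = v"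
        then have "length (take k (u @ v)) = length u" by simp
        then show "k = length u" using kl by simp
      qed simp
      then show "(if take k (u @ v) = u then 1 else 0) * (if drop k (u @ v) = v then 1 else 0) = (if k = length u then (1::qv) else 0)"
        by auto
    qed simp
    then show ?thesis using True by (simp add: fa_mono_def)
  next
    case False
    have "fa_mult (fa_mono u) (fa_mono v) w = (\<Sum>k\<in>{0..length w}. 0)"
      unfolding fa_mult_def fa_mono_def
    proof (rule sum.cong[OF refl])
      fix x
      show "(if take x w = u then 1 else 0) * (if drop x w = v then 1 else 0) = (0::qv)"
        using append_take_drop_id[of x w] False by auto
    qed
    then show ?thesis using False by (simp add: fa_mono_def)
  qed
qed

definition supp :: "fa \<Rightarrow> gen list set" where "supp p = {w. p w \<noteq> 0}"

lemma supp_mult: "supp (fa_mult p q) \<subseteq> (\<lambda>(u,v). u @ v) ` (supp p \<times> supp q)"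
proof
  fix w assume "w \<in> supp (fa_mult p q)"
  then have "(\<Sum>k\<in>{0..length w}. p (take k w) * q (drop k w)) \<noteq> 0"
    by (simp add: supp_def fa_mult_def)
  then obtain k where "p (take k w) * q (drop k w) \<noteq> 0"
    by (meson sum.neutral)
  then show "w \<in> (\<lambda>(u,v). u @ v) ` (supp p \<times> supp q)"
  proof -
    have "(take k w, drop k w) \<in> supp p \<times> supp q" using \<open>p (take k w) * q (drop k w) \<noteq> 0\<close>
      by (auto simp: supp_def)
    then show ?thesis by (rule image_eqI[rotated]) simp
  qed
qed

lemma finite_supp_mult: "finite (supp p) \<Longrightarrow> finite (supp q) \<Longrightarrow> finite (supp (fa_mult p q))"
  by (rule finite_subset[OF supp_mult]) (simp add: finite_cartesian_product)

typedef fs = "{p :: fa. finite (supp p)}"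
  by (rule exI[of _ "\<lambda>_. 0"]) (simp add: supp_def)

setup_lifting type_definition_fs

instantiation fs :: ring_1
begin
lift_definition zero_fs :: fs is "\<lambda>_. 0" by (simp add: supp_def)
lift_definition one_fs :: fs is "fa_mono []"
  by (simp add: supp_def fa_mono_def)
lift_definition plus_fs :: "fs \<Rightarrow> fs \<Rightarrow> fs" is "\<lambda>p q w. p w + q w"
proof -
  fix p q :: fa assume "finite (supp p)" "finite (supp q)"
  then show "finite (supp (\<lambda>w. p w + q w))"
    by (rule finite_subset[rotated, OF finite_UnI]) (auto simp: supp_def)
qed
lift_definition uminus_fs :: "fs \<Rightarrow> fs" is "\<lambda>p w. - p w" by (simp add: supp_def)
lift_definition minus_fs :: "fs \<Rightarrow> fs \<Rightarrow> fs" is "\<lambda>p q w. p w - q w"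
proof -
  fix p q :: fa assume "finite (supp p)" "finite (supp q)"
  then show "finite (supp (\<lambda>w. p w - q w))"
    by (rule finite_subset[rotated, OF finite_UnI]) (auto simp: supp_def)
qed
lift_definition times_fs :: "fs \<Rightarrow> fs \<Rightarrow> fs" is fa_mult by (rule finite_supp_mult)
instance
proof
  fix a b c :: fs
  show "a * b * c = a * (b * c)" by transfer (rule fa_mult_assoc)
  show "1 * a = a" by transfer (rule fa_mult_oneL)
  show "a * 1 = a" by transfer (rule fa_mult_oneR)
  show "(a + b) * c = a * c + b * c" by transfer (rule fa_mult_distR)
  show "a * (b + c) = a * b + a * c" by transfer (rule fa_mult_distL)
  show "a + b + c = a + (b + c)" by transfer (simp add: add.assoc)
  show "a + b = b + a" by transfer (simp add: add.commute)
  show "0 + a = a" by transfer simp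
  show "- a + a = 0" by transfer simp
  show "a - b = a + - b" by transfer simp
  show "(0::fs) \<noteq> 1" by transfer (metis fa_mono_def zero_neq_one)
qed
end

lift_definition scaleF :: "qv \<Rightarrow> fs \<Rightarrow> fs" is "fa_smult"
  by (simp add: supp_def fa_smult_def)

lift_definition gF :: "gen \<Rightarrow> fs" is "\<lambda>g. fa_mono [g]"
  by (simp add: supp_def fa_mono_def)


lemma fa_smult_zero: "fa_smult 0 x = (\<lambda>_. 0)" by (simp add: fa_smult_def)

lemma Tideal_zero: "(\<lambda>_. 0) \<in> Tideal n r"
proof -
  have "fa_diff (fa_prod (map Kg [1..<n+1])) (fa_const (vv ^ r)) \<in> Trels n r"
    unfolding Trels_def by blast
  then have "fa_smult 0 (fa_diff (fa_prod (map Kg [1..<n+1])) (fa_const (vv ^ r))) \<in> Tideal n r"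
    by (intro Tideal.smult Tideal.rel)
  then show ?thesis by (simp add: fa_smult_zero)
qed

definition Iset :: "nat \<Rightarrow> nat \<Rightarrow> fs set" where "Iset n r = {a. Rep_fs a \<in> Tideal n r}"

lemma Rep_fs_plus: "Rep_fs (a + b) = fa_add (Rep_fs a) (Rep_fs b)"
  by transfer (simp add: fa_add_def)
lemma Rep_fs_minus: "Rep_fs (a - b) = fa_diff (Rep_fs a) (Rep_fs b)"
  by transfer (simp add: fa_diff_def)
lemma Rep_fs_uminus: "Rep_fs (- a) = fa_smult (-1) (Rep_fs a)"
  by transfer (simp add: fa_smult_def)
lemma Rep_fs_times: "Rep_fs (a * b) = fa_mult (Rep_fs a) (Rep_fs b)"
  by transfer simp
lemma Rep_fs_scaleF: "Rep_fs (scaleF c a) = fa_smult c (Rep_fs a)"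
  by transfer simp
lemma Rep_fs_one: "Rep_fs 1 = fa_mono []"
  by transfer simp
lemma Rep_fs_zero: "Rep_fs 0 = (\<lambda>_. 0)"
  by transfer simp

lemma Iset_zero: "0 \<in> Iset n r"
  by (simp add: Iset_def Rep_fs_zero Tideal_zero)
lemma Iset_add: "a \<in> Iset n r \<Longrightarrow> b \<in> Iset n r \<Longrightarrow> a + b \<in> Iset n r"
  by (simp add: Iset_def Rep_fs_plus Tideal.add)
lemma Iset_scale: "a \<in> Iset n r \<Longrightarrow> scaleF c a \<in> Iset n r"
  by (simp add: Iset_def Rep_fs_scaleF Tideal.smult)
lemma Iset_uminus: "a \<in> Iset n r \<Longrightarrow> - a \<in> Iset n r"
  by (simp add: Iset_def Rep_fs_uminus Tideal.smult)
lemma Iset_diff: "a \<in> Iset n r \<Longrightarrow> b \<in> Iset n r \<Longrightarrow> a - b \<in> Iset n r"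
  using Iset_add[OF _ Iset_uminus] by (metis diff_conv_add_uminus)

lemma Iset_sum: "finite S \<Longrightarrow> (\<And>x. x \<in> S \<Longrightarrow> f x \<in> Iset n r) \<Longrightarrow> sum f S \<in> Iset n r"
  by (induction S rule: finite_induct) (auto intro: Iset_add Iset_zero)

lift_definition monoF :: "gen list \<Rightarrow> fs" is fa_mono
  by (simp add: supp_def fa_mono_def)

lemma fs_expand: "a = (\<Sum>w\<in>supp (Rep_fs a). scaleF (Rep_fs a w) (monoF w))"
proof -
  have fin: "finite (supp (Rep_fs a))" using Rep_fs by simp
  have "Rep_fs (\<Sum>w\<in>S. scaleF (Rep_fs a w) (monoF w)) u = (\<Sum>w\<in>S. Rep_fs a w * fa_mono w u)"
    if "finite S" for S u
    using that by (induction S rule: finite_induct)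
       (simp_all add: Rep_fs_zero Rep_fs_plus fa_add_def Rep_fs_scaleF fa_smult_def monoF.rep_eq)
  moreover have "(\<Sum>w\<in>S. Rep_fs a w * fa_mono w u) = (\<Sum>w\<in>S. if u = w then Rep_fs a w else 0)" for u S
    by (rule sum.cong) (auto simp: fa_mono_def)
  ultimately have "Rep_fs (\<Sum>w\<in>supp (Rep_fs a). scaleF (Rep_fs a w) (monoF w)) u = Rep_fs a u" for u
    using fin by (simp add: sum.delta supp_def)
  then show ?thesis by (metis Rep_fs_inject ext)
qed

lemma Iset_monoL: "b \<in> Iset n r \<Longrightarrow> monoF w * b \<in> Iset n r"
proof -
  assume "b \<in> Iset n r"
  then have "fa_mult (fa_mult (fa_mono w) (Rep_fs b)) (fa_mono []) \<in> Tideal n r"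
    by (simp add: Iset_def Tideal.mult)
  then show ?thesis by (simp add: Iset_def Rep_fs_times monoF.rep_eq fa_mult_oneR)
qed

lemma Iset_monoR: "b \<in> Iset n r \<Longrightarrow> b * monoF w \<in> Iset n r"
proof -
  assume "b \<in> Iset n r"
  then have "fa_mult (fa_mult (fa_mono []) (Rep_fs b)) (fa_mono w) \<in> Tideal n r"
    by (simp add: Iset_def Tideal.mult)
  then show ?thesis by (simp add: Iset_def Rep_fs_times monoF.rep_eq fa_mult_oneL)
qed

lemma scaleF_mult_left: "scaleF c a * b = scaleF c (a * b)"
  by transfer (auto simp: fa_smult_def fa_mult_def sum_distrib_left mult.assoc)
lemma scaleF_mult_right: "a * scaleF c b = scaleF c (a * b)"
  by transfer (auto simp: fa_smult_def fa_mult_def sum_distrib_left mult.left_commute)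

lemma Iset_multL: "b \<in> Iset n r \<Longrightarrow> a * b \<in> Iset n r"
proof -
  assume b: "b \<in> Iset n r"
  have "a * b = (\<Sum>w\<in>supp (Rep_fs a). scaleF (Rep_fs a w) (monoF w * b))"
    by (subst fs_expand[of a]) (simp add: sum_distrib_right scaleF_mult_left)
  also have "\<dots> \<in> Iset n r"
    using Rep_fs[of a] by (intro Iset_sum Iset_scale Iset_monoL b) auto
  finally show ?thesis .
qed

lemma Iset_multR: "b \<in> Iset n r \<Longrightarrow> b * a \<in> Iset n r"
proof -
  assume b: "b \<in> Iset n r"
  have "b * a = (\<Sum>w\<in>supp (Rep_fs a). scaleF (Rep_fs a w) (b * monoF w))"
    by (subst fs_expand[of a]) (simp add: sum_distrib_left scaleF_mult_right)
  also have "\<dots> \<in> Iset n r"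
    using Rep_fs[of a] by (intro Iset_sum Iset_scale Iset_monoR b) auto
  finally show ?thesis .
qed

definition Trel :: "(nat \<times> nat \<Rightarrow> fs) \<Rightarrow> (nat \<times> nat \<Rightarrow> fs) \<Rightarrow> bool" where
  "Trel f g \<longleftrightarrow> (\<forall>nr. f nr - g nr \<in> Iset (fst nr) (snd nr))"

lemma equivp_Trel: "equivp Trel"
proof (rule equivpI)
  show "reflp Trel" by (auto simp: reflp_def Trel_def Iset_zero)
  show "symp Trel" unfolding symp_def Trel_def
  proof (intro allI impI)
    fix x y :: "nat \<times> nat \<Rightarrow> fs" and nr
    assume "\<forall>nr. x nr - y nr \<in> Iset (fst nr) (snd nr)"
    then have "- (x nr - y nr) \<in> Iset (fst nr) (snd nr)" using Iset_uminus[of "x nr - y nr" "fst nr" "snd nr"] by (cases nr) auto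
    then show "y nr - x nr \<in> Iset (fst nr) (snd nr)" by simp
  qed
  show "transp Trel" unfolding transp_def Trel_def
  proof (intro allI impI)
    fix x y z :: "nat \<times> nat \<Rightarrow> fs" and nr
    assume h: "\<forall>nr. x nr - y nr \<in> Iset (fst nr) (snd nr)" "\<forall>nr. y nr - z nr \<in> Iset (fst nr) (snd nr)"
    have "(x nr - y nr) + (y nr - z nr) \<in> Iset (fst nr) (snd nr)" by (rule Iset_add[OF h(1)[rule_format] h(2)[rule_format]])
    then show "x nr - z nr \<in> Iset (fst nr) (snd nr)" by simp
  qed
qed

quotient_type Tq = "nat \<times> nat \<Rightarrow> fs" / Trel
  by (rule equivp_Trel)

instantiation Tq :: ring_1
begin
lift_definition zero_Tq :: Tq is "0" .
lift_definition one_Tq :: Tq is "1" .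
lift_definition plus_Tq :: "Tq \<Rightarrow> Tq \<Rightarrow> Tq" is "(+)"
proof -
  fix f f' g g' :: "nat \<times> nat \<Rightarrow> fs"
  assume a: "Trel f f'" "Trel g g'"
  show "Trel (f + g) (f' + g')" unfolding Trel_def
  proof
    fix nr
    have "(f + g) nr - (f' + g') nr = (f nr - f' nr) + (g nr - g' nr)"
      by (simp add: algebra_simps)
    also have "\<dots> \<in> Iset (fst nr) (snd nr)"
      using a unfolding Trel_def by (cases nr) (simp add: Iset_add)
    finally show "(f + g) nr - (f' + g') nr \<in> Iset (fst nr) (snd nr)" .
  qed
qed
lift_definition minus_Tq :: "Tq \<Rightarrow> Tq \<Rightarrow> Tq" is "(-)"
proof -
  fix f f' g g' :: "nat \<times> nat \<Rightarrow> fs"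
  assume a: "Trel f f'" "Trel g g'"
  show "Trel (f - g) (f' - g')" unfolding Trel_def
  proof
    fix nr
    have "(f - g) nr - (f' - g') nr = (f nr - f' nr) - (g nr - g' nr)"
      by (simp add: algebra_simps)
    also have "\<dots> \<in> Iset (fst nr) (snd nr)"
      using a unfolding Trel_def by (cases nr) (simp add: Iset_diff)
    finally show "(f - g) nr - (f' - g') nr \<in> Iset (fst nr) (snd nr)" .
  qed
qed
lift_definition uminus_Tq :: "Tq \<Rightarrow> Tq" is "uminus"
proof -
  fix f f' :: "nat \<times> nat \<Rightarrow> fs"
  assume a: "Trel f f'"
  show "Trel (- f) (- f')" unfolding Trel_def
  proof
    fix nr
    have "(- f) nr - (- f') nr = - (f nr - f' nr)"
      by (simp add: algebra_simps)
    also have "\<dots> \<in> Iset (fst nr) (snd nr)"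
      using a Iset_uminus[of "f nr - f' nr" "fst nr" "snd nr"] unfolding Trel_def by (cases nr) auto
    finally show "(- f) nr - (- f') nr \<in> Iset (fst nr) (snd nr)" .
  qed
qed
lift_definition times_Tq :: "Tq \<Rightarrow> Tq \<Rightarrow> Tq" is "(*)"
proof -
  fix f f' g g' :: "nat \<times> nat \<Rightarrow> fs"
  assume a: "Trel f f'" "Trel g g'"
  show "Trel (f * g) (f' * g')" unfolding Trel_def
  proof
    fix nr
    have "(f * g) nr - (f' * g') nr = (f nr - f' nr) * g nr + f' nr * (g nr - g' nr)"
      by (simp add: algebra_simps)
    also have "\<dots> \<in> Iset (fst nr) (snd nr)"
      using a unfolding Trel_def by (cases nr) (simp add: Iset_add Iset_multL Iset_multR)
    finally show "(f * g) nr - (f' * g') nr \<in> Iset (fst nr) (snd nr)" .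
  qed
qed
instance
proof
  fix a b c :: Tq
  show "a * b * c = a * (b * c)" by transfer (simp add: mult.assoc Trel_def Iset_zero)
  show "1 * a = a" by transfer (simp add: Trel_def Iset_zero)
  show "a * 1 = a" by transfer (simp add: Trel_def Iset_zero)
  show "(a + b) * c = a * c + b * c" by transfer (simp add: distrib_right Trel_def Iset_zero)
  show "a * (b + c) = a * b + a * c" by transfer (simp add: distrib_left Trel_def Iset_zero)
  show "a + b + c = a + (b + c)" by transfer (simp add: add.assoc Trel_def Iset_zero)
  show "a + b = b + a" by transfer (simp add: add.commute Trel_def Iset_zero)
  show "0 + a = a" by transfer (simp add: Trel_def Iset_zero)
  show "- a + a = 0" by transfer (simp add: Trel_def Iset_zero)
  show "a - b = a + - b" by transfer (simp add: Trel_def Iset_zero)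
  show "(0::Tq) \<noteq> 1"
  proof transfer
    have T00: "x \<in> Tideal 0 0 \<Longrightarrow> x = (\<lambda>_. 0)" for x
    proof (induction rule: Tideal.induct)
      case (rel x)
      then show ?case
        by (auto simp: Trels_def fa_diff_def fa_prod_def fa_const_def fa_smult_def)
    next
      case (add x y) then show ?case by (simp add: fa_add_def)
    next
      case (smult x c) then show ?case by (simp add: fa_smult_def)
    next
      case (mult x a b) then show ?case by (simp add: fa_mult_def)
    qed
    show "\<not> Trel 0 1"
    proof
      assume "Trel 0 1"
      then have "(0::fs) - 1 \<in> Iset 0 0" unfolding Trel_def by (metis fst_conv snd_conv zero_fun_def one_fun_def)
      then have "Rep_fs (0 - 1) = (\<lambda>_. 0)" by (simp add: Iset_def T00)
      then have "Rep_fs (0 - 1) [] = 0" by simp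
      then show False by (simp add: Rep_fs_uminus Rep_fs_one fa_smult_def fa_mono_def)
    qed
  qed
qed
end


lemma scaleF_diff: "scaleF c a - scaleF c b = scaleF c (a - b)"
  by transfer (simp add: fa_smult_def algebra_simps)

lemma scaleF_add: "scaleF c (a + b) = scaleF c a + scaleF c b"
  by transfer (simp add: fa_smult_def algebra_simps)
lemma scaleF_uminus: "scaleF c (- a) = - scaleF c a"
  by transfer (simp add: fa_smult_def algebra_simps)
lemma scaleF_zero: "scaleF c 0 = 0"
  by transfer (simp add: fa_smult_def)
lemma scaleF_zero_left: "scaleF 0 a = 0"
  by transfer (simp add: fa_smult_def)
lemma scaleF_one: "scaleF 1 a = a"
  by transfer (simp add: fa_smult_def)
lemma scaleF_scaleF: "scaleF c (scaleF d a) = scaleF (c * d) a"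
  by transfer (simp add: fa_smult_def mult.assoc)
lemma scaleF_add_left: "scaleF (c + d) a = scaleF c a + scaleF d a"
  by transfer (simp add: fa_smult_def algebra_simps)

lifting_forget fs.lifting

lift_definition scaleT :: "qv \<Rightarrow> Tq \<Rightarrow> Tq" is "\<lambda>c f nr. scaleF c (f nr)"
  unfolding Trel_def by (simp add: scaleF_diff Iset_scale)

lift_definition \<iota> :: "nat \<Rightarrow> nat \<Rightarrow> fs \<Rightarrow> Tq" is "\<lambda>n r a nr. if nr = (n, r) then a else 0" .

lemma Trel_eqI: "(\<And>nr. f nr = g nr) \<Longrightarrow> Trel f g"
  by (simp add: Trel_def Iset_zero)

lemma scaleT_mult_left: "scaleT c x * y = scaleT c (x * y)"
  by transfer (auto intro!: Trel_eqI simp: scaleF_mult_left)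
lemma scaleT_mult_right: "x * scaleT c y = scaleT c (x * y)"
  by transfer (auto intro!: Trel_eqI simp: scaleF_mult_right)
lemma scaleT_add: "scaleT c (x + y) = scaleT c x + scaleT c y"
  by transfer (auto intro!: Trel_eqI simp: scaleF_add)
lemma scaleT_diff: "scaleT c (x - y) = scaleT c x - scaleT c y"
  by transfer (auto intro!: Trel_eqI simp: scaleF_diff)
lemma scaleT_uminus: "scaleT c (- x) = - scaleT c x"
  by transfer (auto intro!: Trel_eqI simp: scaleF_uminus)
lemma scaleT_zero[simp]: "scaleT c 0 = 0"
  by transfer (auto intro!: Trel_eqI simp: scaleF_zero)
lemma scaleT_zero_left[simp]: "scaleT 0 x = 0"
  by transfer (auto intro!: Trel_eqI simp: scaleF_zero_left)
lemma scaleT_one[simp]: "scaleT 1 x = x"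
  by transfer (auto intro!: Trel_eqI simp: scaleF_one)
lemma scaleT_scaleT[simp]: "scaleT c (scaleT d x) = scaleT (c * d) x"
  by transfer (auto intro!: Trel_eqI simp: scaleF_scaleF)
lemma scaleT_add_left: "scaleT (c + d) x = scaleT c x + scaleT d x"
  by transfer (auto intro!: Trel_eqI simp: scaleF_add_left)
lemma scaleT_diff_left: "scaleT (c - d) x = scaleT c x - scaleT d x"
  by (metis add_diff_cancel diff_add_cancel scaleT_add_left)

lemma iota_add: "\<iota> n r (a + b) = \<iota> n r a + \<iota> n r b"
  by transfer (auto intro!: Trel_eqI)
lemma iota_diff: "\<iota> n r (a - b) = \<iota> n r a - \<iota> n r b"
  by transfer (auto intro!: Trel_eqI)
lemma iota_mult: "\<iota> n r (a * b) = \<iota> n r a * \<iota> n r b"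
  by transfer (auto intro!: Trel_eqI)
lemma iota_scale: "\<iota> n r (scaleF c a) = scaleT c (\<iota> n r a)"
  by transfer (auto intro!: Trel_eqI simp: scaleF_zero)
lemma iota_zero: "\<iota> n r 0 = 0"
  by transfer (auto intro!: Trel_eqI)

lemma iota_eq_iff: "\<iota> n r a = \<iota> n r b \<longleftrightarrow> a - b \<in> Iset n r"
proof -
  have "\<iota> n r a = \<iota> n r b \<longleftrightarrow> Trel (\<lambda>nr. if nr = (n, r) then a else 0) (\<lambda>nr. if nr = (n, r) then b else 0)"
    by transfer' (simp add: Tq.abs_eq_iff)
  also have "\<dots> \<longleftrightarrow> a - b \<in> Iset n r"
    unfolding Trel_def by (auto simp: Iset_zero)
  finally show ?thesis .
qed

lemma T_eq_iota: "T_eq n r (Rep_fs a) (Rep_fs b) \<longleftrightarrow> \<iota> n r a = \<iota> n r b"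
  by (simp add: T_eq_def iota_eq_iff Iset_def Rep_fs_minus)

lemma rel_zero: "Rep_fs a \<in> Trels n r \<Longrightarrow> \<iota> n r a = 0"
  using iota_eq_iff[of n r a 0] by (simp add: iota_zero Iset_def Tideal.rel)

lemma tr_mono: "fa_mono w = Rep_fs (monoF w)" by (simp add: monoF.rep_eq)
lemma tr_mult: "fa_mult (Rep_fs a) (Rep_fs b) = Rep_fs (a * b)" by (simp add: Rep_fs_times)
lemma tr_diff: "fa_diff (Rep_fs a) (Rep_fs b) = Rep_fs (a - b)" by (simp add: Rep_fs_minus)
lemma tr_add: "fa_add (Rep_fs a) (Rep_fs b) = Rep_fs (a + b)" by (simp add: Rep_fs_plus)
lemma tr_smult: "fa_smult c (Rep_fs a) = Rep_fs (scaleF c a)" by (simp add: Rep_fs_scaleF)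
lemma tr_const: "fa_const c = Rep_fs (scaleF c 1)" by (simp add: fa_const_def Rep_fs_scaleF Rep_fs_one)
lemma tr_zero: "(\<lambda>_. 0) = Rep_fs 0" by (simp add: Rep_fs_zero)
lemma tr_prod: "fa_prod (map (\<lambda>x. Rep_fs (g x)) xs) = Rep_fs (prod_list (map g xs))"
  by (induction xs) (simp_all add: fa_prod_def Rep_fs_one tr_mult)

lemmas tr = tr_mono tr_mult tr_diff tr_add tr_smult tr_const tr_prod

lemma iota_prod: "\<iota> n r (prod_list (map g xs)) = \<iota> n r 1 * prod_list (map (\<lambda>x. \<iota> n r (g x)) xs)"
proof (induction xs)
  case Nil then show ?case by simp
next
  case (Cons a xs)
  have c: "\<iota> n r 1 * y = y * \<iota> n r 1" for y
    by transfer (auto intro!: Trel_eqI)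
  have "\<iota> n r 1 * \<iota> n r y = \<iota> n r y" for y by (metis iota_mult mult_1_left)
  then show ?case using Cons by (simp add: iota_mult mult.assoc c)
qed


definition eT :: "nat \<Rightarrow> nat \<Rightarrow> Tq" where "eT n r = \<iota> n r 1"
definition ET :: "nat \<Rightarrow> nat \<Rightarrow> nat \<Rightarrow> Tq" where "ET n r j = \<iota> n r (monoF [GE j])"
definition FT :: "nat \<Rightarrow> nat \<Rightarrow> nat \<Rightarrow> Tq" where "FT n r j = \<iota> n r (monoF [GF j])"
definition KT :: "nat \<Rightarrow> nat \<Rightarrow> nat \<Rightarrow> Tq" where "KT n r j = \<iota> n r (monoF [GK j])"
definition KiT :: "nat \<Rightarrow> nat \<Rightarrow> nat \<Rightarrow> Tq" where "KiT n r j = \<iota> n r (monoF [GKi j])"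

lemma e_central: "eT n r * x = x * eT n r"
  unfolding eT_def by transfer (auto intro!: Trel_eqI)
lemma e_iota: "eT n r * \<iota> n r a = \<iota> n r a"
  unfolding eT_def by (metis iota_mult mult_1_left)
lemma iota_e: "\<iota> n r a * eT n r = \<iota> n r a"
  unfolding eT_def by (metis iota_mult mult_1_right)
lemma e_idem: "eT n r * eT n r = eT n r"
  unfolding eT_def by (metis iota_mult mult_1_right)

lemma iota_prod': "\<iota> n r (prod_list (map g xs)) = eT n r * prod_list (map (\<lambda>x. \<iota> n r (g x)) xs)"
  unfolding eT_def by (rule iota_prod)

lemmas iota_simps = iota_add iota_diff iota_mult iota_scale iota_zero iota_prod' 
  eT_def[symmetric] ET_def[symmetric] FT_def[symmetric] KT_def[symmetric] KiT_def[symmetric]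

context
  fixes n r :: nat
begin

lemma rel_KK: "i \<in> {1..n} \<Longrightarrow> j \<in> {1..n} \<Longrightarrow> KT n r i * KT n r j = KT n r j * KT n r i"
proof -
  assume a: "i \<in> {1..n}" "j \<in> {1..n}"
  have "fa_diff (fa_mult (Kg i) (Kg j)) (fa_mult (Kg j) (Kg i)) \<in> Trels n r"
    using a unfolding Trels_def by blast
  then have "Rep_fs (monoF [GK i] * monoF [GK j] - monoF [GK j] * monoF [GK i]) \<in> Trels n r"
    by (simp only: tr)
  from rel_zero[OF this] show ?thesis by (simp add: iota_simps)
qed

lemma rel_KKi: "i \<in> {1..n} \<Longrightarrow> KT n r i * KiT n r i = eT n r"
proof -
  assume a: "i \<in> {1..n}"
  have "fa_diff (fa_mult (Kg i) (Kig i)) (fa_mono []) \<in> Trels n r"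
    using a unfolding Trels_def by blast
  then have "Rep_fs (monoF [GK i] * monoF [GKi i] - monoF []) \<in> Trels n r"
    by (simp only: tr)
  moreover have "monoF [] = 1" by (metis Rep_fs_inverse Rep_fs_one tr_mono)
  ultimately have "Rep_fs (monoF [GK i] * monoF [GKi i] - 1) \<in> Trels n r" by simp
  from rel_zero[OF this] show ?thesis by (simp add: iota_simps)
qed

lemma rel_KiK: "i \<in> {1..n} \<Longrightarrow> KiT n r i * KT n r i = eT n r"
proof -
  assume a: "i \<in> {1..n}"
  have "fa_diff (fa_mult (Kig i) (Kg i)) (fa_mono []) \<in> Trels n r"
    using a unfolding Trels_def by blast
  then have "Rep_fs (monoF [GKi i] * monoF [GK i] - monoF []) \<in> Trels n r"
    by (simp only: tr)
  moreover have "monoF [] = 1" by (metis Rep_fs_inverse Rep_fs_one tr_mono)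
  ultimately have "Rep_fs (monoF [GKi i] * monoF [GK i] - 1) \<in> Trels n r" by simp
  from rel_zero[OF this] show ?thesis by (simp add: iota_simps)
qed

lemma rel_KE: "i \<in> {1..n} \<Longrightarrow> j \<in> {1..n} \<Longrightarrow>
    KT n r i * ET n r j = scaleT (vpow (epsp n i j)) (ET n r j * KT n r i)"
proof -
  assume a: "i \<in> {1..n}" "j \<in> {1..n}"
  have "fa_diff (fa_mult (Kg i) (Eg j)) (fa_smult (vpow (epsp n i j)) (fa_mult (Eg j) (Kg i))) \<in> Trels n r"
    using a unfolding Trels_def by blast
  then have "Rep_fs (monoF [GK i] * monoF [GE j] - scaleF (vpow (epsp n i j)) (monoF [GE j] * monoF [GK i])) \<in> Trels n r"
    by (simp only: tr)
  from rel_zero[OF this] show ?thesis by (simp add: iota_simps)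
qed

lemma rel_KF: "i \<in> {1..n} \<Longrightarrow> j \<in> {1..n} \<Longrightarrow>
    KT n r i * FT n r j = scaleT (vpow (- epsp n i j)) (FT n r j * KT n r i)"
proof -
  assume a: "i \<in> {1..n}" "j \<in> {1..n}"
  have "fa_diff (fa_mult (Kg i) (Fg j)) (fa_smult (vpow (- epsp n i j)) (fa_mult (Fg j) (Kg i))) \<in> Trels n r"
    using a unfolding Trels_def by blast
  then have "Rep_fs (monoF [GK i] * monoF [GF j] - scaleF (vpow (- epsp n i j)) (monoF [GF j] * monoF [GK i])) \<in> Trels n r"
    by (simp only: tr)
  from rel_zero[OF this] show ?thesis by (simp add: iota_simps)
qed

lemma rel_EF_same: "i \<in> {1..n} \<Longrightarrow>
    ET n r i * FT n r i - FT n r i * ET n r i = scaleT (inverse (vv - inverse vv))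
      (KT n r i * KiT n r (wrap n (int i + 1)) - KiT n r i * KT n r (wrap n (int i + 1)))"
proof -
  assume a: "i \<in> {1..n}"
  have "fa_diff (fa_diff (fa_mult (Eg i) (Fg i)) (fa_mult (Fg i) (Eg i)))
       (fa_smult (inverse (vv - inverse vv))
           (fa_diff (fa_mult (Kg i) (Kig (wrap n (int i + 1))))
                    (fa_mult (Kig i) (Kg (wrap n (int i + 1)))))) \<in> Trels n r"
    using a unfolding Trels_def by (simp; blast)
  then have "Rep_fs ((monoF [GE i] * monoF [GF i] - monoF [GF i] * monoF [GE i]) -
      scaleF (inverse (vv - inverse vv)) (monoF [GK i] * monoF [GKi (wrap n (int i + 1))]
         - monoF [GKi i] * monoF [GK (wrap n (int i + 1))])) \<in> Trels n r"
    by (simp only: tr)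
  from rel_zero[OF this] show ?thesis by (simp add: iota_simps)
qed

lemma rel_EF_diff: "i \<in> {1..n} \<Longrightarrow> j \<in> {1..n} \<Longrightarrow> i \<noteq> j \<Longrightarrow>
    ET n r i * FT n r j = FT n r j * ET n r i"
proof -
  assume a: "i \<in> {1..n}" "j \<in> {1..n}" "i \<noteq> j"
  have "fa_diff (fa_diff (fa_mult (Eg i) (Fg j)) (fa_mult (Fg j) (Eg i))) (\<lambda>_. 0) \<in> Trels n r"
    using a unfolding Trels_def by (simp; blast)
  then have "Rep_fs ((monoF [GE i] * monoF [GF j] - monoF [GF j] * monoF [GE i]) - 0) \<in> Trels n r"
    by (simp only: tr tr_zero)
  from rel_zero[OF this] show ?thesis by (simp add: iota_simps)
qed

lemma rel_EE: "i \<in> {1..n} \<Longrightarrow> j \<in> {1..n} \<Longrightarrow> \<not> adj n i j \<Longrightarrow>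
    ET n r i * ET n r j = ET n r j * ET n r i"
proof -
  assume a: "i \<in> {1..n}" "j \<in> {1..n}" "\<not> adj n i j"
  have "fa_diff (fa_mult (Eg i) (Eg j)) (fa_mult (Eg j) (Eg i)) \<in> Trels n r"
    using a unfolding Trels_def by blast
  then have "Rep_fs (monoF [GE i] * monoF [GE j] - monoF [GE j] * monoF [GE i]) \<in> Trels n r"
    by (simp only: tr)
  from rel_zero[OF this] show ?thesis by (simp add: iota_simps)
qed

lemma rel_Kprod: "eT n r * prod_list (map (KT n r) [1..<n+1]) = scaleT (vv ^ r) (eT n r)"
proof -
  have "fa_diff (fa_prod (map Kg [1..<n+1])) (fa_const (vv ^ r)) \<in> Trels n r"
    unfolding Trels_def by blast
  moreover have "map Kg [1..<n+1] = map (\<lambda>j. Rep_fs (monoF [GK j])) [1..<n+1]"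
    by (simp add: tr_mono)
  ultimately have "Rep_fs (prod_list (map (\<lambda>j. monoF [GK j]) [1..<n+1]) - scaleF (vv ^ r) 1) \<in> Trels n r"
    by (simp only: tr)
  from rel_zero[OF this] show ?thesis by (simp add: iota_simps comp_def)
qed

lemma rel_Kpoly: "i \<in> {1..n} \<Longrightarrow>
   eT n r * prod_list (map (\<lambda>j. KT n r i - scaleT (vv ^ j) (eT n r)) [0..<r+1]) = 0"
proof -
  assume a: "i \<in> {1..n}"
  have "fa_prod (map (\<lambda>j. fa_diff (Kg i) (fa_const (vv ^ j))) [0..<r+1]) \<in> Trels n r"
    using a unfolding Trels_def by blast
  then have "Rep_fs (prod_list (map (\<lambda>j. monoF [GK i] - scaleF (vv ^ j) 1) [0..<r+1])) \<in> Trels n r"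
    by (simp only: tr)
  from rel_zero[OF this] show ?thesis by (simp only: iota_simps)
qed

end


lemma vv_pow: "vv ^ m = Fract ([:0, 1:] ^ m) 1"
  by (induction m) (simp_all add: vv_def One_fract_def)

lemma vv_pow_eq_one: "vv ^ m = 1 \<longleftrightarrow> m = 0"
proof
  assume "vv ^ m = 1"
  then have "Fract ([:0, 1:] ^ m) 1 = Fract (1 :: rat poly) 1" by (metis vv_pow One_fract_def)
  then have "([:0, 1:] :: rat poly) ^ m = 1" by (simp add: eq_fract)
  then have "degree (([:0, 1:] :: rat poly) ^ m) = 0" by simp
  then show "m = 0" by (simp add: degree_power_eq)
qed simp

lemma vv_nz[simp]: "vv \<noteq> 0"
  unfolding vv_def by (simp add: Zero_fract_def eq_fract)

lemma vv_pow_inj: "vv ^ a = vv ^ b \<longleftrightarrow> a = b"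
proof
  assume h: "vv ^ a = vv ^ b"
  show "a = b"
  proof (cases "a \<le> b")
    case True
    then have "vv ^ b = vv ^ a * vv ^ (b - a)" by (simp add: power_add[symmetric])
    with h have "vv ^ (b - a) = 1" by simp
    then show ?thesis using True vv_pow_eq_one by simp
  next
    case False
    then have "vv ^ a = vv ^ b * vv ^ (a - b)" by (simp add: power_add[symmetric])
    with h have "vv ^ (a - b) = 1" by simp
    then show ?thesis using False vv_pow_eq_one by simp
  qed
qed simp

lemma inv_vv_ne_pow: "inverse vv \<noteq> vv ^ c"
proof
  assume "inverse vv = vv ^ c"
  then have "vv ^ Suc c = 1" by (simp add: field_simps)
  then show False using vv_pow_eq_one by blast
qed

context
  fixes n r :: nat
begin

abbreviation "e \<equiv> eT n r"

definition PL :: "Tq \<Rightarrow> qv list \<Rightarrow> Tq" where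
  "PL z L = prod_list (map (\<lambda>\<mu>. z - scaleT \<mu> e) L)"

definition G :: "nat \<Rightarrow> Tq \<Rightarrow> Tq" where
  "G m z = PL z (map (\<lambda>c. vv ^ c) [0..<m+1])"

lemma sc_e_comm: "scaleT \<mu> e * w = w * scaleT \<mu> e"
  by (simp add: scaleT_mult_left scaleT_mult_right e_central)

lemma sc_mult: "scaleT a x * scaleT b y = scaleT (a * b) (x * y)"
  by (simp add: scaleT_mult_left scaleT_mult_right mult.commute)

lemma lin_comm: "z * w = w * z \<Longrightarrow> (z - scaleT \<mu> e) * w = w * (z - scaleT \<mu> e)"
  by (simp add: left_diff_distrib right_diff_distrib sc_e_comm)

lemma PL_comm: "z * w = w * z \<Longrightarrow> PL z L * w = w * PL z L"
proof (induction L)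
  case Nil then show ?case by (simp add: PL_def)
next
  case (Cons \<mu> L)
  then have "PL z (\<mu> # L) * w = (z - scaleT \<mu> e) * (w * PL z L)"
    by (simp add: PL_def mult.assoc)
  also have "\<dots> = w * PL z (\<mu> # L)"
    using lin_comm[OF Cons.prems] by (simp add: PL_def mult.assoc[symmetric])
  finally show ?case .
qed

lemma PL_append: "PL z (L1 @ L2) = PL z L1 * PL z L2"
  by (simp add: PL_def)

lemma PL_Cons: "PL z (\<mu> # L) = (z - scaleT \<mu> e) * PL z L"
  by (simp add: PL_def)

lemma PL_Nil: "PL z [] = 1"
  by (simp add: PL_def)


lemma PL_eig: "e * U = U \<Longrightarrow> z * U = scaleT l U \<Longrightarrow> PL z L * U = scaleT (prod_list (map (\<lambda>\<mu>. l - \<mu>) L)) U"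
proof (induction L)
  case Nil then show ?case by (simp add: PL_def)
next
  case (Cons \<mu> L)
  have "PL z (\<mu> # L) * U = (z - scaleT \<mu> e) * scaleT (prod_list (map (\<lambda>\<mu>. l - \<mu>) L)) U"
    using Cons by (simp add: PL_def mult.assoc)
  also have "\<dots> = scaleT (prod_list (map (\<lambda>\<mu>. l - \<mu>) L)) (z * U - scaleT \<mu> (e * U))"
    by (simp add: scaleT_mult_right left_diff_distrib scaleT_mult_left scaleT_diff)
  also have "\<dots> = scaleT (prod_list (map (\<lambda>\<mu>. l - \<mu>) L)) (scaleT (l - \<mu>) U)"
    using Cons.prems by (simp only: scaleT_diff_left)
  also have "\<dots> = scaleT (prod_list (map (\<lambda>\<mu>. l - \<mu>) (\<mu> # L))) U"
    by (simp add: mult.commute)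
  finally show ?case .
qed

lemma PL_subst:
  assumes xy: "x * y = y * x" and eU: "e * U = U" and xU: "x * U = scaleT l U"
  shows "PL (x * y) L * U = PL (scaleT l y) L * U"
proof (induction L)
  case Nil then show ?case by (simp add: PL_def)
next
  case (Cons \<mu> L)
  define V where "V = PL (scaleT l y) L * U"
  have xc: "x * scaleT l y = scaleT l y * x"
    by (simp add: scaleT_mult_left scaleT_mult_right xy)
  have xV: "x * V = scaleT l V"
  proof -
    have "x * V = (x * PL (scaleT l y) L) * U" by (simp add: V_def mult.assoc)
    also have "\<dots> = PL (scaleT l y) L * (x * U)" using PL_comm[OF xc[symmetric], of L] by (metis mult.assoc)
    also have "\<dots> = scaleT l V" by (simp add: xU V_def scaleT_mult_right)
    finally show ?thesis .
  qed
  have "x * y * V = scaleT l y * V"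
    by (simp add: xy mult.assoc xV scaleT_mult_right scaleT_mult_left)
  then have "(x * y - scaleT \<mu> e) * V = (scaleT l y - scaleT \<mu> e) * V"
    by (simp add: left_diff_distrib)
  then show ?case using Cons by (simp add: PL_def mult.assoc V_def)
qed


lemma PL_scale: "PL (scaleT l y) (map (\<lambda>\<mu>. l * \<mu>) L) = scaleT (l ^ length L) (PL y L)"
proof (induction L)
  case Nil then show ?case by (simp add: PL_def)
next
  case (Cons \<mu> L)
  have "scaleT l y - scaleT (l * \<mu>) e = scaleT l (y - scaleT \<mu> e)"
    by (simp add: scaleT_diff)
  then show ?case using Cons by (simp add: PL_def sc_mult)
qed

lemma PL_taylor: "\<exists>H. (\<forall>w. z * w = w * z \<longrightarrow> H * w = w * H) \<and>
    e * PL z L = scaleT (prod_list (map (\<lambda>\<mu>. l - \<mu>) L)) e + H * (z - scaleT l e)"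
proof (induction L)
  case Nil
  show ?case by (rule exI[of _ 0]) (simp add: PL_def)
next
  case (Cons \<mu> L)
  then obtain H where H: "\<forall>w. z * w = w * z \<longrightarrow> H * w = w * H"
    and eq: "e * PL z L = scaleT (prod_list (map (\<lambda>\<mu>. l - \<mu>) L)) e + H * (z - scaleT l e)"
    by blast
  define c where "c = prod_list (map (\<lambda>\<mu>. l - \<mu>) L)"
  define H' where "H' = scaleT c e + (z - scaleT \<mu> e) * H"
  have "e * PL z (\<mu> # L) = (z - scaleT \<mu> e) * (e * PL z L)"
    by (simp only: PL_Cons mult.assoc[symmetric] e_central[of n r "z - scaleT \<mu> e"])
  also have "\<dots> = (z - scaleT \<mu> e) * scaleT c e + (z - scaleT \<mu> e) * H * (z - scaleT l e)"
    by (simp add: eq c_def distrib_left mult.assoc)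
  also have "(z - scaleT \<mu> e) * scaleT c e = scaleT c (z * e - scaleT \<mu> e)"
  proof -
    have "(z - scaleT \<mu> e) * scaleT c e = scaleT c ((z - scaleT \<mu> e) * e)"
      by (rule scaleT_mult_right)
    also have "(z - scaleT \<mu> e) * e = z * e - scaleT \<mu> e"
      by (simp add: left_diff_distrib scaleT_mult_left e_idem)
    finally show ?thesis .
  qed
  also have "\<dots> = scaleT (c * (l - \<mu>)) e + scaleT c e * (z - scaleT l e)"
  proof -
    have a: "scaleT c e * (z - scaleT l e) = scaleT c (z * e - scaleT l e)"
    proof -
      have "scaleT c e * (z - scaleT l e) = scaleT c (e * (z - scaleT l e))"
        by (rule scaleT_mult_left)
      also have "e * (z - scaleT l e) = z * e - scaleT l e"
        by (simp only: right_diff_distrib scaleT_mult_right e_idem e_central[of n r z])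
      finally show ?thesis .
    qed
    have b: "scaleT (c * (l - \<mu>)) e = scaleT c (scaleT l e - scaleT \<mu> e)"
      by (simp add: scaleT_diff_left[symmetric])
    show ?thesis unfolding a b scaleT_add[symmetric] by simp
  qed
  finally have "e * PL z (\<mu> # L) = scaleT (c * (l - \<mu>)) e + H' * (z - scaleT l e)"
    by (simp add: H'_def distrib_right add.assoc)
  moreover have "\<forall>w. z * w = w * z \<longrightarrow> H' * w = w * H'"
  proof (intro allI impI)
    fix w assume zw: "z * w = w * z"
    have "(z - scaleT \<mu> e) * H * w = w * ((z - scaleT \<mu> e) * H)"
    proof -
      have h1: "H * w = w * H" using H zw by blast
      have h2: "(z - scaleT \<mu> e) * w = w * (z - scaleT \<mu> e)" by (rule lin_comm[OF zw])
      show ?thesis by (simp only: mult.assoc h1) (simp only: mult.assoc[symmetric] h2)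
    qed
    moreover have "scaleT c e * w = w * scaleT c e" by (rule sc_e_comm)
    ultimately show "H' * w = w * H'"
      by (simp only: H'_def distrib_right distrib_left)
  qed
  ultimately show ?case unfolding c_def by (auto simp: mult.commute)
qed


lemma G_Suc: "G (Suc m) z = G m z * (z - scaleT (vv ^ Suc m) e)"
  by (simp add: G_def PL_append PL_def mult.assoc)

lemma G_comm: "z * w = w * z \<Longrightarrow> G m z * w = w * G m z"
  unfolding G_def by (rule PL_comm)

lemma G_0: "G 0 z = z - e"
  by (simp add: G_def PL_def)

lemma comm_prod_list: "(\<And>y. y \<in> set ys \<Longrightarrow> x * y = y * x) \<Longrightarrow> x * prod_list ys = prod_list ys * x"
proof (induction ys)
  case Nil then show ?case by simp
next
  case (Cons y ys)
  then have "x * prod_list ys = prod_list ys * x" "x * y = y * x" by auto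
  then show ?case by (simp add: mult.assoc[symmetric]) (simp add: mult.assoc)
qed

lemma cancel_scale: "g \<noteq> 0 \<Longrightarrow> scaleT g X = 0 \<Longrightarrow> X = 0"
  by (metis scaleT_scaleT scaleT_one scaleT_zero field_class.field_inverse mult.commute)

lemma G_mult:
  assumes "x * y = y * x" "e * W = W" "G a x * W = 0" "G b y * W = 0"
  shows "G (a + b) (x * y) * W = 0"
  using assms(2-4)
proof (induction a arbitrary: W)
  case 0
  have "x * W = scaleT 1 W" using 0 by (simp add: G_0 left_diff_distrib)
  then have "G b (x * y) * W = G b (scaleT 1 y) * W"
    unfolding G_def by (rule PL_subst[OF assms(1) 0(1)])
  then show ?case using 0 by simp
next
  case (Suc a W)
  define c where "c = vv ^ Suc a"
  define W1 where "W1 = (x - scaleT c e) * W"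
  define W2 where "W2 = G a x * W"
  have yc: "y * (x - scaleT c e) = (x - scaleT c e) * y"
    using lin_comm[of x y c] assms(1) by simp
  have eW1: "e * W1 = W1"
    unfolding W1_def by (metis Suc.prems(1) e_central mult.assoc)
  have "G a x * W1 = G (Suc a) x * W"
    by (simp add: W1_def G_Suc c_def mult.assoc)
  then have a1: "G a x * W1 = 0" using Suc.prems by simp
  have "G b y * W1 = (x - scaleT c e) * (G b y * W)"
    unfolding W1_def using G_comm[OF yc, of b] by (metis mult.assoc)
  then have a2: "G b y * W1 = 0" using Suc.prems by simp
  have IH: "G (a + b) (x * y) * W1 = 0" by (rule Suc.IH[OF eW1 a1 a2])
  have eW2: "e * W2 = W2"
    unfolding W2_def by (metis Suc.prems(1) e_central mult.assoc)
  have "(x - scaleT c e) * W2 = G (Suc a) x * W"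
    unfolding W2_def G_Suc c_def[symmetric]
    using G_comm[of x "x - scaleT c e" a] lin_comm[of x x c] by (metis mult.assoc)
  then have "(x - scaleT c e) * W2 = 0" using Suc.prems by simp
  then have xW2: "x * W2 = scaleT c W2"
    using eW2 by (simp add: left_diff_distrib scaleT_mult_left)
  have "G b y * W2 = G a x * (G b y * W)"
    unfolding W2_def using G_comm[OF assms(1), of a] G_comm[of y "G a x" b]
    by (metis mult.assoc)
  then have yW2: "G b y * W2 = 0" using Suc.prems by simp
  define Z where "Z = G (Suc a + b) (x * y)"
  have "Z * W2 = PL (scaleT c y) (map (\<lambda>k. vv ^ k) [0..<Suc a + b + 1]) * W2"
    unfolding Z_def G_def by (rule PL_subst[OF assms(1) eW2 xW2])
  also have "map (\<lambda>k. vv ^ k) [0..<Suc a + b + 1] = map (\<lambda>k. vv ^ k) [0..<Suc a] @ map (\<lambda>\<mu>. c * \<mu>) (map (\<lambda>k. vv ^ k) [0..<b + 1])"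
  proof -
    have l1: "[0..<Suc a + b + 1] = [0..<Suc a] @ [Suc a..<Suc a + b + 1]"
      using upt_add_eq_append[of 0 "Suc a" "b + 1"] by (simp add: add.assoc)
    have l2: "[Suc a..<Suc a + b + 1] = map (\<lambda>k. Suc a + k) [0..<b+1]"
      by (rule nth_equalityI) (simp_all del: upt_Suc)
    show ?thesis unfolding l1 l2 by (simp add: c_def power_add)
  qed
  also have "PL (scaleT c y) (map (\<lambda>k. vv ^ k) [0..<Suc a] @ map (\<lambda>\<mu>. c * \<mu>) (map (\<lambda>k. vv ^ k) [0..<b + 1])) * W2
      = PL (scaleT c y) (map (\<lambda>k. vv ^ k) [0..<Suc a]) * (scaleT (c ^ (b + 1)) (G b y) * W2)"
    unfolding PL_append PL_scale G_def by (simp add: mult.assoc)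
  finally have "Z * W2 = PL (scaleT c y) (map (\<lambda>k. vv ^ k) [0..<Suc a]) * (scaleT (c ^ (b + 1)) (G b y) * W2)" .
  then have ZW2: "Z * W2 = 0"
    by (simp add: scaleT_mult_left yW2)
  obtain H where Hc: "\<forall>w. x * w = w * x \<longrightarrow> H * w = w * H"
    and Heq: "e * PL x (map (\<lambda>k. vv ^ k) [0..<a+1]) =
       scaleT (prod_list (map (\<lambda>\<mu>. c - \<mu>) (map (\<lambda>k. vv ^ k) [0..<a+1]))) e + H * (x - scaleT c e)"
    using PL_taylor[where z=x and L="map (\<lambda>k. vv ^ k) [0..<a+1]" and l=c] by blast
  define g where "g = prod_list (map (\<lambda>\<mu>. c - \<mu>) (map (\<lambda>k. vv ^ k) [0..<a+1]))"
  have "\<forall>\<mu>\<in>set (map (\<lambda>k. vv ^ k) [0..<a+1]). c - \<mu> \<noteq> 0"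
  proof
    fix \<mu> assume "\<mu> \<in> set (map (\<lambda>k. vv ^ k) [0..<a+1])"
    then obtain k where "k < a + 1" "\<mu> = vv ^ k" by (auto simp del: upt_Suc)
    then show "c - \<mu> \<noteq> 0" unfolding c_def using vv_pow_inj[of "Suc a" k] by auto
  qed
  then have gnz: "g \<noteq> 0"
    unfolding g_def by (auto simp: prod_list_zero_iff)
  have "scaleT g W = scaleT g e * W"
    using Suc.prems(1) by (simp add: scaleT_mult_left)
  also have "scaleT g e = e * G a x - H * (x - scaleT c e)"
    using Heq by (simp add: G_def g_def)
  finally have "scaleT g W = (e * G a x - H * (x - scaleT c e)) * W" .
  also have "\<dots> = e * G a x * W - H * W1"
    by (simp only: left_diff_distrib W1_def mult.assoc)
  also have "e * G a x * W = W2"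
    by (simp only: e_central[of n r "G a x"] mult.assoc Suc.prems(1) W2_def)
  finally have gW: "scaleT g W = W2 - H * W1" .
  have HZ: "Z * H = H * Z"
  proof -
    have "x * (x * y) = (x * y) * x" using assms(1) by (metis mult.assoc)
    then have "H * (x * y) = (x * y) * H" using Hc by blast
    then show ?thesis unfolding Z_def by (intro G_comm) simp
  qed
  have "Z * W1 = (x * y - scaleT (vv ^ Suc (a + b)) e) * (G (a + b) (x * y) * W1)"
  proof -
    have "Z = G (a + b) (x * y) * (x * y - scaleT (vv ^ Suc (a + b)) e)"
      unfolding Z_def by (simp add: G_Suc)
    also have "\<dots> = (x * y - scaleT (vv ^ Suc (a + b)) e) * G (a + b) (x * y)"
      by (intro G_comm) (metis lin_comm)
    finally show ?thesis by (simp add: mult.assoc)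
  qed
  then have ZW1: "Z * W1 = 0" using IH by simp
  have "scaleT g (Z * W) = Z * W2 - Z * (H * W1)"
    by (simp add: scaleT_mult_right[symmetric] gW right_diff_distrib)
  also have "Z * (H * W1) = H * (Z * W1)" by (metis HZ mult.assoc)
  finally have "scaleT g (Z * W) = 0" using ZW1 ZW2 by simp
  then show ?case unfolding Z_def using cancel_scale[OF gnz] by blast
qed

lemma G_prod_list:
  assumes "e * W = W"
    and "\<And>p q. p \<in> set ps \<Longrightarrow> q \<in> set ps \<Longrightarrow> snd p * snd q = snd q * snd p"
    and "\<And>p. p \<in> set ps \<Longrightarrow> G (fst p) (snd p) * W = 0"
  shows "G (sum_list (map fst ps)) (prod_list (map snd ps)) * W = 0"
  using assms(2,3)
proof (induction ps)
  case Nil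
  then show ?case using assms(1) by (simp add: G_0 left_diff_distrib)
next
  case (Cons p ps)
  have c: "snd p * prod_list (map snd ps) = prod_list (map snd ps) * snd p"
  proof (rule comm_prod_list)
    fix y assume "y \<in> set (map snd ps)"
    then obtain q where "q \<in> set ps" "y = snd q" by auto
    then show "snd p * y = y * snd p" using Cons.prems(1)[of p q] by simp
  qed
  have "G (fst p + sum_list (map fst ps)) (snd p * prod_list (map snd ps)) * W = 0"
    by (rule G_mult[OF c assms(1)]) (use Cons in auto)
  then show ?case by simp
qed

end


lemma vpow_powi: "vpow a = vv powi a"
  by (simp add: vpow_def power_int_def)

lemma vpow_add: "vpow (a + b) = vpow a * vpow b"
  by (simp add: vpow_powi power_int_add)

lemma vpow_0[simp]: "vpow 0 = 1" by (simp add: vpow_def)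
lemma vpow_1[simp]: "vpow 1 = vv" by (simp add: vpow_def)
lemma vpow_m1[simp]: "vpow (-1) = inverse vv" by (simp add: vpow_def)
lemma vpow_nz: "vpow a \<noteq> 0" by (simp add: vpow_powi)
lemma vpow_minus: "vpow (- a) = inverse (vpow a)" by (simp add: vpow_powi power_int_minus)

lemma wrap_id: "1 \<le> j \<Longrightarrow> j \<le> n \<Longrightarrow> wrap n (int j) = j"
  by (simp add: wrap_def)

lemma wrap_minus1: "2 \<le> j \<Longrightarrow> j \<le> n \<Longrightarrow> wrap n (int j - 1) = j - 1"
  using wrap_id[of "j - 1" n] by (simp add: of_nat_diff)

lemma wrap_zero: "1 \<le> n \<Longrightarrow> wrap n (int 1 - 1) = n"
proof -
  assume "1 \<le> n"
  then have "(-1::int) mod int n = int n - 1"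
    by (simp add: zmod_minus1)
  then show ?thesis using \<open>1 \<le> n\<close> by (simp add: wrap_def)
qed

lemma wrap_plus1: "1 \<le> j \<Longrightarrow> j + 1 \<le> n \<Longrightarrow> wrap n (int j + 1) = j + 1"
  using wrap_id[of "j + 1" n] by (simp add: add.commute)

lemma sum_epsp: "distinct ks \<Longrightarrow> m \<noteq> wrap n (int m - 1) \<Longrightarrow>
  sum_list (map (epsp n m) ks) = of_bool (m \<in> set ks) - of_bool (wrap n (int m - 1) \<in> set ks)"
  by (induction ks) (auto simp: epsp_def)

definition cc :: qv where "cc = inverse (vv - inverse vv)"

lemma vv_ne_inv: "vv \<noteq> inverse vv"
proof
  assume "vv = inverse vv"
  then have "vv ^ 2 = 1" by (metis power2_eq_square right_inverse vv_nz)
  then show False using vv_pow_eq_one by simp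
qed

lemma cc_mult: "cc * (vv - inverse vv) = 1"
  using vv_ne_inv by (simp add: cc_def)

context
  fixes n r :: nat
  assumes r3: "3 \<le> r" and rn: "r < n"
begin

abbreviation "ee \<equiv> eT n r"
abbreviation "EE \<equiv> ET n r"
abbreviation "FF \<equiv> FT n r"
abbreviation "KK \<equiv> KT n r"
abbreviation "KI \<equiv> KiT n r"

lemma gen_corner: "ee * EE j = EE j" "EE j * ee = EE j" "ee * FF j = FF j" "FF j * ee = FF j"
   "ee * KK j = KK j" "KK j * ee = KK j" "ee * KI j = KI j" "KI j * ee = KI j"
  by (simp_all add: ET_def FT_def KT_def KiT_def e_iota iota_e)

lemma KiK_comm: "a \<in> {1..n} \<Longrightarrow> b \<in> {1..n} \<Longrightarrow> KI a * KK b = KK b * KI a"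
proof -
  assume a: "a \<in> {1..n}" "b \<in> {1..n}"
  have "KI a * KK b = KI a * KK b * (KK a * KI a)"
    using a rel_KKi[of a n r] by (simp add: mult.assoc gen_corner)
  also have "\<dots> = KI a * (KK b * KK a) * KI a" by (simp add: mult.assoc)
  also have "\<dots> = KI a * (KK a * KK b) * KI a" using rel_KK[of b n a r] a by simp
  also have "\<dots> = (KI a * KK a) * KK b * KI a" by (simp add: mult.assoc)
  also have "\<dots> = KK b * KI a" using a rel_KiK[of a n r] by (simp add: gen_corner)
  finally show ?thesis .
qed

lemma KiKi_comm: "a \<in> {1..n} \<Longrightarrow> b \<in> {1..n} \<Longrightarrow> KI a * KI b = KI b * KI a"
proof -
  assume a: "a \<in> {1..n}" "b \<in> {1..n}"
  have "KI a * KI b = KI a * KI b * (KK a * KI a)"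
    using a rel_KKi[of a n r] by (simp add: mult.assoc gen_corner)
  also have "\<dots> = KI a * (KI b * KK a) * KI a" by (simp add: mult.assoc)
  also have "\<dots> = KI a * (KK a * KI b) * KI a" using KiK_comm[of b a] a by simp
  also have "\<dots> = (KI a * KK a) * KI b * KI a" by (simp add: mult.assoc)
  also have "\<dots> = KI b * KI a" using a rel_KiK[of a n r] by (simp add: gen_corner)
  finally show ?thesis .
qed

lemma KK_comm: "a \<in> {1..n} \<Longrightarrow> b \<in> {1..n} \<Longrightarrow> KK a * KK b = KK b * KK a"
  by (rule rel_KK)

lemma Ki_eig: "j \<in> {1..n} \<Longrightarrow> ee * W = W \<Longrightarrow> KK j * W = scaleT c W \<Longrightarrow> c \<noteq> 0 \<Longrightarrow>
   KI j * W = scaleT (inverse c) W"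
proof -
  assume a: "j \<in> {1..n}" "ee * W = W" "KK j * W = scaleT c W" "c \<noteq> 0"
  have "W = KI j * KK j * W" using a rel_KiK[of j n r] by simp
  also have "\<dots> = scaleT c (KI j * W)" using a by (simp add: mult.assoc scaleT_mult_right)
  finally have "W = scaleT c (KI j * W)" .
  then have "scaleT (inverse c) W = scaleT (inverse c * c) (KI j * W)" by (metis scaleT_scaleT)
  then show ?thesis using a by simp
qed

lemma vanish: "j \<in> {1..n} \<Longrightarrow> ee * Z = Z \<Longrightarrow> KK j * Z = scaleT (inverse vv) Z \<Longrightarrow> Z = 0"
proof -
  assume a: "j \<in> {1..n}" "ee * Z = Z" "KK j * Z = scaleT (inverse vv) Z"
  have "G n r r (KK j) * Z = (ee * G n r r (KK j)) * Z"
    using a(2) by (metis e_central mult.assoc)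
  also have "ee * G n r r (KK j) = 0"
    using rel_Kpoly[OF a(1), of r] by (simp add: G_def PL_def comp_def)
  finally have "G n r r (KK j) * Z = 0" by simp
  moreover have "G n r r (KK j) * Z = scaleT (prod_list (map (\<lambda>\<mu>. inverse vv - \<mu>) (map (\<lambda>c. vv ^ c) [0..<r+1]))) Z"
    unfolding G_def by (rule PL_eig[OF a(2) a(3)])
  moreover have "prod_list (map (\<lambda>\<mu>. inverse vv - \<mu>) (map (\<lambda>c. vv ^ c) [0..<r+1])) \<noteq> 0"
    using inv_vv_ne_pow by (auto simp: prod_list_zero_iff simp del: upt_Suc)
  ultimately show "Z = 0" using cancel_scale by metis
qed

definition fK :: "nat \<Rightarrow> Tq" where "fK k = scaleT cc (KK k - KI k)"

definition PT :: Tq where "PT = ee * prod_list (map fK [1..<r+1])"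

lemma fK_comm: "a \<in> {1..n} \<Longrightarrow> b \<in> {1..n} \<Longrightarrow> fK a * fK b = fK b * fK a"
proof -
  assume a: "a \<in> {1..n}" "b \<in> {1..n}"
  have "(KK a - KI a) * (KK b - KI b) = (KK b - KI b) * (KK a - KI a)"
    using KK_comm[OF a] KiK_comm[OF a] KiK_comm[OF a(2) a(1)] KiKi_comm[OF a]
    by (simp add: algebra_simps)
  then show ?thesis by (simp add: fK_def sc_mult mult.commute)
qed

lemma K_fK_comm: "a \<in> {1..n} \<Longrightarrow> b \<in> {1..n} \<Longrightarrow> KK a * fK b = fK b * KK a"
  unfolding fK_def
  using KK_comm[of a b] KiK_comm[of b a]
  by (simp add: scaleT_mult_left scaleT_mult_right algebra_simps)

lemma prod_list_extract:
  "x \<in> set xs \<Longrightarrow> (\<And>y. y \<in> set xs \<Longrightarrow> x * y = y * x) \<Longrightarrow> \<exists>Q. prod_list xs = x * Q"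
proof (induction xs)
  case Nil then show ?case by simp
next
  case (Cons y ys)
  show ?case
  proof (cases "x = y")
    case True then show ?thesis by auto
  next
    case False
    then obtain Q where "prod_list ys = x * Q" using Cons by auto
    then have "prod_list (y # ys) = x * (y * Q)"
      using Cons.prems(2)[of y] by (simp add: mult.assoc[symmetric])
    then show ?thesis by blast
  qed
qed

lemma PT_extract: "k \<in> {1..r} \<Longrightarrow> \<exists>Q. PT = fK k * Q"
proof -
  assume k: "k \<in> {1..r}"
  have "\<exists>Q. prod_list (map fK [1..<r+1]) = fK k * Q"
  proof (rule prod_list_extract)
    show "fK k \<in> set (map fK [1..<r+1])" unfolding set_map by (rule imageI) (use k in \<open>auto simp del: upt_Suc\<close>)
    fix y assume "y \<in> set (map fK [1..<r+1])"
    then obtain l where l1: "l \<in> set [1..<r+1]" "y = fK l" by (auto simp del: upt_Suc)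
    then have "l \<in> {1..r}" by (simp del: upt_Suc)
    then show "fK k * y = y * fK k" using k rn fK_comm[of k l] l1 by auto
  qed
  then obtain Q where "prod_list (map fK [1..<r+1]) = fK k * Q" by blast
  then have "PT = fK k * (ee * Q)"
    unfolding PT_def by (metis e_central mult.assoc)
  then show ?thesis by blast
qed

lemma PT_corner: "ee * PT = PT"
  unfolding PT_def by (simp add: mult.assoc[symmetric] e_idem)

lemma G_K_zero: "k \<in> {1..n} \<Longrightarrow> ee * X = X \<Longrightarrow> G n r r (KK k) * X = 0"
proof -
  assume a: "k \<in> {1..n}" "ee * X = X"
  have "G n r r (KK k) * X = (ee * G n r r (KK k)) * X"
    using a(2) by (metis e_central mult.assoc)
  also have "ee * G n r r (KK k) = 0"
    using rel_Kpoly[OF a(1), of r] by (simp add: G_def PL_def comp_def)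
  finally show ?thesis by simp
qed

lemma PL1_fK: "k \<in> {1..n} \<Longrightarrow> PL n r (KK k) (map (\<lambda>c. vv ^ (c + 1)) [0..<r]) * fK k = 0"
proof -
  assume k: "k \<in> {1..n}"
  let ?L = "map (\<lambda>c. vv ^ (c + 1)) [0..<r]"
  have m: "map (\<lambda>c. vv ^ c) [0..<Suc r] = vv ^ 0 # map (\<lambda>c. vv ^ (Suc c)) [0..<r]"
    by (rule map_upt_Suc)
  have "G n r r (KK k) = (KK k - ee) * PL n r (KK k) ?L"
    unfolding G_def using m by (simp add: PL_Cons)
  also have "\<dots> = PL n r (KK k) ?L * (KK k - ee)"
    by (metis PL_comm lin_comm scaleT_one)
  finally have Gk: "G n r r (KK k) = PL n r (KK k) ?L * (KK k - ee)" .
  have "KK k - KI k = (KK k - ee) * (ee + KI k)"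
    using rel_KKi[of k n r] k by (simp add: algebra_simps gen_corner e_idem)
  then have "PL n r (KK k) ?L * fK k = scaleT cc (G n r r (KK k) * (ee + KI k))"
    unfolding fK_def Gk by (simp add: scaleT_mult_right mult.assoc)
  also have "G n r r (KK k) * (ee + KI k) = 0"
    by (rule G_K_zero[OF k]) (simp add: distrib_left e_idem gen_corner)
  finally show ?thesis by simp
qed

lemma G_shift: "G n r m (scaleT (inverse vv ^ d) y) =
   scaleT ((inverse vv ^ d) ^ (m + 1)) (PL n r y (map (\<lambda>c. vv ^ (c + d)) [0..<m+1]))"
proof -
  have "map (\<lambda>c. vv ^ c) [0..<m+1] = map (\<lambda>\<mu>. inverse vv ^ d * \<mu>) (map (\<lambda>c. vv ^ (c + d)) [0..<m+1])"
    by (simp add: power_add power_inverse del: upt_Suc)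
  then show ?thesis unfolding G_def by (simp only: PL_scale) (simp del: upt_Suc)
qed

lemma prod_scaled: "prod_list (map (\<lambda>k. scaleT (s k) (f k)) ks) = scaleT (prod_list (map s ks)) (prod_list (map f ks))"
  by (induction ks) (simp_all add: sc_mult)

lemma prod_inv_pow: "prod_list (map (\<lambda>k. inverse vv ^ d k) ks) = inverse vv ^ sum_list (map d ks)"
  by (induction ks) (simp_all add: power_add)

lemma K_eig_PT: assumes j: "j \<in> {1..r}" shows "KK j * PT = scaleT vv PT"
proof -
  define Z where "Z = (KK j - scaleT vv ee) * PT"
  have eZ: "ee * Z = Z"
    unfolding Z_def using PT_corner by (metis e_central mult.assoc)
  define d where "d k = (if k = j then 2 else if k \<le> r then 1 else 0::nat)" for k
  define ps where "ps = map (\<lambda>k. (r - d k, scaleT (inverse vv ^ d k) (KK k))) [1..<n+1]"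
  have jn: "j \<in> {1..n}" using j rn by auto
  have each: "G n r (r - d k) (scaleT (inverse vv ^ d k) (KK k)) * Z = 0" if k: "k \<in> {1..n}" for k
  proof -
    have "G n r (r - d k) (scaleT (inverse vv ^ d k) (KK k)) * Z =
      scaleT ((inverse vv ^ d k) ^ (r - d k + 1)) (PL n r (KK k) (map (\<lambda>c. vv ^ (c + d k)) [0..<r - d k + 1]) * Z)"
      by (simp only: G_shift scaleT_mult_left)
    also have "PL n r (KK k) (map (\<lambda>c. vv ^ (c + d k)) [0..<r - d k + 1]) * Z = 0"
    proof (cases "k \<le> r")
      case False
      then have "d k = 0" using j by (auto simp: d_def)
      then have "PL n r (KK k) (map (\<lambda>c. vv ^ (c + d k)) [0..<r - d k + 1]) = G n r r (KK k)"
        by (simp add: G_def del: upt_Suc)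
      then show ?thesis using G_K_zero[OF k eZ] by simp
    next
      case True
      then obtain Q where Q: "PT = fK k * Q" using PT_extract k by auto
      have cm: "PL n r (KK k) L * (KK j - scaleT vv ee) = (KK j - scaleT vv ee) * PL n r (KK k) L" for L
        by (rule PL_comm, rule lin_comm[symmetric]) (use KK_comm[OF jn k] in simp)
      show ?thesis
      proof (cases "k = j")
        case False
        then have "d k = 1" using True by (auto simp: d_def)
        then have "PL n r (KK k) (map (\<lambda>c. vv ^ (c + d k)) [0..<r - d k + 1]) * Z =
          (KK j - scaleT vv ee) * (PL n r (KK k) (map (\<lambda>c. vv ^ (c + 1)) [0..<r]) * fK k) * Q"
          using r3 unfolding Z_def Q by (simp add: mult.assoc[symmetric] cm del: upt_Suc)
        then show ?thesis using PL1_fK[OF k] by simp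
      next
        case True
        then have dk: "d k = 2" by (simp add: d_def)
        have m: "map (\<lambda>c. vv ^ (c + 1)) [0..<Suc (r - 1)] = vv ^ (0 + 1) # map (\<lambda>c. vv ^ (Suc c + 1)) [0..<r - 1]"
          by (rule map_upt_Suc)
        have r2: "Suc (r - 1) = r" using r3 by arith
        have m2: "map (\<lambda>c. vv ^ (Suc c + 1)) [0..<r - 1] = map (\<lambda>c. vv ^ (c + 2)) [0..<r - 1]"
          by simp
        have L1: "PL n r (KK j) (map (\<lambda>c. vv ^ (c + 1)) [0..<r]) =
            PL n r (KK j) (map (\<lambda>c. vv ^ (c + 2)) [0..<r - 1]) * (KK j - scaleT vv ee)"
          using m unfolding r2 m2 by (simp add: PL_Cons) (metis PL_comm lin_comm)
        have "r - d k + 1 = r - 1" using dk r3 by simp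
        then have "PL n r (KK k) (map (\<lambda>c. vv ^ (c + d k)) [0..<r - d k + 1]) * Z =
          PL n r (KK j) (map (\<lambda>c. vv ^ (c + 1)) [0..<r]) * fK j * Q"
          using True dk r3 unfolding Z_def Q L1 by (simp add: mult.assoc del: upt_Suc)
        then show ?thesis using PL1_fK[OF jn] True by simp
      qed
    qed
    finally show ?thesis by simp
  qed
  have mem: "\<exists>k\<in>{1..n}. p = (r - d k, scaleT (inverse vv ^ d k) (KK k))" if "p \<in> set ps" for p
    using that unfolding ps_def set_map set_upt by auto
  have comm: "snd p * snd q = snd q * snd p" if pq: "p \<in> set ps" "q \<in> set ps" for p q
  proof -
    obtain k l where "k \<in> {1..n}" "l \<in> {1..n}" "snd p = scaleT (inverse vv ^ d k) (KK k)"
      "snd q = scaleT (inverse vv ^ d l) (KK l)"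
      using mem[OF pq(1)] mem[OF pq(2)] by auto
    then show ?thesis using KK_comm by (simp add: sc_mult mult.commute)
  qed
  have "G n r (sum_list (map fst ps)) (prod_list (map snd ps)) * Z = 0"
  proof (rule G_prod_list[OF eZ comm])
    fix p assume "p \<in> set ps"
    then obtain k where "k \<in> {1..n}" "p = (r - d k, scaleT (inverse vv ^ d k) (KK k))"
      using mem by blast
    then show "G n r (fst p) (snd p) * Z = 0" using each by simp
  qed
  moreover have "sum_list (map d [1..<n+1]) = r + 1"
  proof -
    have "sum_list (map d [1..<n+1]) = sum d {1..<n+1}"
      by (simp only: sum_set_upt_conv_sum_list_nat[symmetric] set_upt)
    also have "\<dots> = (\<Sum>k\<in>{1..<n+1}. of_bool (k \<le> r) + of_bool (k = j))"
      using j by (intro sum.cong) (auto simp: d_def)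
    also have "\<dots> = card ({1..<n+1} \<inter> {k. k \<le> r}) + card ({1..<n+1} \<inter> {k. k = j})"
      by (subst sum.distrib) (metis (no_types) finite_atLeastLessThan of_nat_id sum_of_bool_eq)
    also have "{1..<n+1} \<inter> {k. k \<le> r} = {1..r}" using rn by auto
    also have "{1..<n+1} \<inter> {k. k = j} = {j}" using j rn by auto
    finally show ?thesis by simp
  qed
  then have "prod_list (map snd ps) = scaleT (inverse vv ^ (r + 1)) (prod_list (map KK [1..<n+1]))"
    unfolding ps_def by (simp add: comp_def prod_scaled prod_inv_pow del: upt_Suc)
  moreover have "prod_list (map KK [1..<n+1]) * Z = scaleT (vv ^ r) Z"
  proof -
    have "prod_list (map KK [1..<n+1]) * Z = (ee * prod_list (map KK [1..<n+1])) * Z"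
      using eZ by (metis e_central mult.assoc)
    also have "\<dots> = scaleT (vv ^ r) Z" using rel_Kprod[of n r] eZ by (simp add: scaleT_mult_left)
    finally show ?thesis .
  qed
  ultimately have "G n r (sum_list (map fst ps)) (scaleT (inverse vv ^ (r + 1)) (prod_list (map KK [1..<n+1]))) * Z = 0"
    and eig: "scaleT (inverse vv ^ (r + 1)) (prod_list (map KK [1..<n+1])) * Z = scaleT (inverse vv) Z"
    by (simp_all add: scaleT_mult_left power_inverse field_simps del: upt_Suc)
  moreover have "G n r N (scaleT (inverse vv ^ (r + 1)) (prod_list (map KK [1..<n+1]))) * Z =
      scaleT (prod_list (map (\<lambda>\<mu>. inverse vv - \<mu>) (map (\<lambda>c. vv ^ c) [0..<N+1]))) Z" for N
    unfolding G_def by (rule PL_eig[OF eZ eig])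
  moreover have "prod_list (map (\<lambda>\<mu>. inverse vv - \<mu>) (map (\<lambda>c. vv ^ c) [0..<N+1])) \<noteq> 0" for N
    using inv_vv_ne_pow by (auto simp: prod_list_zero_iff simp del: upt_Suc)
  ultimately have "Z = 0" using cancel_scale by metis
  then show ?thesis
    unfolding Z_def using PT_corner by (simp add: left_diff_distrib scaleT_mult_left)
qed

end


context
  fixes n r :: nat
  assumes r3: "3 \<le> r" and rn: "r < n"
begin

definition HH :: "nat \<Rightarrow> Tq" where
  "HH m = scaleT cc (KT n r m * KiT n r (m + 1) - KiT n r m * KT n r (m + 1))"

lemma EF_same: "m \<in> {1..n} \<Longrightarrow> m + 1 \<le> n \<Longrightarrow> ET n r m * FT n r m = FT n r m * ET n r m + HH m"
  using rel_EF_same[of m n r] wrap_plus1[of m n] by (simp add: HH_def cc_def algebra_simps)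

lemma FE_same: "m \<in> {1..n} \<Longrightarrow> m + 1 \<le> n \<Longrightarrow> FT n r m * ET n r m = ET n r m * FT n r m - HH m"
  using EF_same by (simp add: algebra_simps)

lemma K_Elist: "m \<in> {1..n} \<Longrightarrow> set ks \<subseteq> {1..n} \<Longrightarrow>
   KT n r m * prod_list (map (ET n r) ks) = scaleT (vpow (sum_list (map (epsp n m) ks))) (prod_list (map (ET n r) ks) * KT n r m)"
proof (induction ks)
  case Nil then show ?case by simp
next
  case (Cons k ks)
  have "KT n r m * prod_list (map (ET n r) (k # ks)) = (KT n r m * ET n r k) * prod_list (map (ET n r) ks)"
    by (simp add: mult.assoc)
  also have "\<dots> = scaleT (vpow (epsp n m k)) (ET n r k * (KT n r m * prod_list (map (ET n r) ks)))"
    using Cons.prems rel_KE[of m n k r] by (simp add: scaleT_mult_left mult.assoc)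
  also have "\<dots> = scaleT (vpow (epsp n m k) * vpow (sum_list (map (epsp n m) ks))) (ET n r k * prod_list (map (ET n r) ks) * KT n r m)"
    using Cons by (simp add: scaleT_mult_right mult.assoc)
  finally show ?case by (simp add: vpow_add mult.assoc)
qed

lemma eig_list: "m \<in> {1..r} \<Longrightarrow> set ks \<subseteq> {1..n} \<Longrightarrow>
   KT n r m * (prod_list (map (ET n r) ks) * PT n r) = scaleT (vpow (sum_list (map (epsp n m) ks) + 1)) (prod_list (map (ET n r) ks) * PT n r)"
proof -
  assume a: "m \<in> {1..r}" "set ks \<subseteq> {1..n}"
  then have mn: "m \<in> {1..n}" using rn by auto
  have "KT n r m * (prod_list (map (ET n r) ks) * PT n r) = scaleT (vpow (sum_list (map (epsp n m) ks))) (prod_list (map (ET n r) ks) * (KT n r m * PT n r))"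
    using K_Elist[OF mn a(2)] by (simp add: mult.assoc[symmetric] scaleT_mult_left)
  also have "\<dots> = scaleT (vpow (sum_list (map (epsp n m) ks)) * vv) (prod_list (map (ET n r) ks) * PT n r)"
    using K_eig_PT[OF r3 rn a(1)] by (simp add: scaleT_mult_right)
  finally show ?thesis by (simp add: vpow_add)
qed

lemma corner_list: "eT n r * (X * PT n r) = X * PT n r"
  using PT_corner[OF r3 rn] by (metis e_central mult.assoc)

lemma vanish_list: "m \<in> {1..r} \<Longrightarrow> set ks \<subseteq> {1..n} \<Longrightarrow> sum_list (map (epsp n m) ks) = -2 \<Longrightarrow>
   prod_list (map (ET n r) ks) * PT n r = 0"
proof -
  assume a: "m \<in> {1..r}" "set ks \<subseteq> {1..n}" "sum_list (map (epsp n m) ks) = -2"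
  have "KT n r m * (prod_list (map (ET n r) ks) * PT n r) = scaleT (inverse vv) (prod_list (map (ET n r) ks) * PT n r)"
    using eig_list[OF a(1,2)] a(3) by simp
  moreover have mn: "m \<in> {1..n}" using a(1) rn by auto
  ultimately show ?thesis using vanish[OF r3 rn mn corner_list] by blast
qed

lemma H_list: "m \<in> {1..r} \<Longrightarrow> m + 1 \<in> {1..r} \<Longrightarrow> set ks \<subseteq> {1..n} \<Longrightarrow>
   HH m * (prod_list (map (ET n r) ks) * PT n r) =
   scaleT (cc * (vpow (sum_list (map (epsp n m) ks) - sum_list (map (epsp n (m+1)) ks))
               - vpow (sum_list (map (epsp n (m+1)) ks) - sum_list (map (epsp n m) ks))))
     (prod_list (map (ET n r) ks) * PT n r)"
proof -
  assume a: "m \<in> {1..r}" "m + 1 \<in> {1..r}" "set ks \<subseteq> {1..n}"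
  define W where "W = prod_list (map (ET n r) ks) * PT n r"
  define s1 where "s1 = sum_list (map (epsp n m) ks)"
  define s2 where "s2 = sum_list (map (epsp n (m+1)) ks)"
  have eW: "eT n r * W = W" unfolding W_def by (rule corner_list)
  have k1: "KT n r m * W = scaleT (vpow (s1 + 1)) W" unfolding W_def s1_def by (rule eig_list[OF a(1,3)])
  have k2: "KT n r (m+1) * W = scaleT (vpow (s2 + 1)) W" unfolding W_def s2_def by (rule eig_list[OF a(2,3)])
  have mn: "m \<in> {1..n}" "m + 1 \<in> {1..n}" using a rn by auto
  have i1: "KiT n r m * W = scaleT (inverse (vpow (s1 + 1))) W" by (rule Ki_eig[OF r3 rn mn(1) eW k1 vpow_nz])
  have i2: "KiT n r (m+1) * W = scaleT (inverse (vpow (s2 + 1))) W" by (rule Ki_eig[OF r3 rn mn(2) eW k2 vpow_nz])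
  have "HH m * W = scaleT cc (KT n r m * (KiT n r (m + 1) * W) - KiT n r m * (KT n r (m + 1) * W))"
    by (simp add: HH_def scaleT_mult_left left_diff_distrib mult.assoc)
  also have "KT n r m * (KiT n r (m + 1) * W) = scaleT (vpow (s1 + 1) * inverse (vpow (s2 + 1))) W"
    unfolding i2 scaleT_mult_right k1 by (simp add: mult.commute)
  also have "KiT n r m * (KT n r (m + 1) * W) = scaleT (inverse (vpow (s1 + 1)) * vpow (s2 + 1)) W"
    unfolding k2 scaleT_mult_right i1 by (simp add: mult.commute)
  also have "scaleT cc (scaleT (vpow (s1 + 1) * inverse (vpow (s2 + 1))) W - scaleT (inverse (vpow (s1 + 1)) * vpow (s2 + 1)) W)
     = scaleT (cc * (vpow (s1 + 1) * inverse (vpow (s2 + 1)) - inverse (vpow (s1 + 1)) * vpow (s2 + 1))) W"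
    by (simp add: scaleT_diff_left[symmetric])
  also have "vpow (s1 + 1) * inverse (vpow (s2 + 1)) = vpow (s1 - s2)"
    by (simp add: vpow_minus[symmetric] vpow_add[symmetric])
  also have "inverse (vpow (s1 + 1)) * vpow (s2 + 1) = vpow (s2 - s1)"
    by (simp add: vpow_minus[symmetric] vpow_add[symmetric])
  finally show ?thesis unfolding W_def s1_def s2_def .
qed

lemma w_ge2: "2 \<le> m \<Longrightarrow> m \<le> n \<Longrightarrow> wrap n (int m - 1) = m - 1"
  by (rule wrap_minus1)

lemma w_1: "wrap n (int 1 - 1) = n"
  using rn by (intro wrap_zero) auto

lemma sum_epsp_upt2: "2 \<le> m \<Longrightarrow> m \<le> n \<Longrightarrow>
  sum_list (map (epsp n m) [a..<b]) = of_bool (a \<le> m \<and> m < b) - of_bool (a \<le> m - 1 \<and> m - 1 < b)"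
  using sum_epsp[of "[a..<b]" m n] w_ge2[of m] by simp

lemma sum_epsp_upt1: "sum_list (map (epsp n 1) [a..<b]) = of_bool (a \<le> 1 \<and> 1 < b) - of_bool (a \<le> n \<and> n < b)"
  using sum_epsp[of "[a..<b]" 1 n] w_1 rn r3 by simp

lemma epsp2: "2 \<le> m \<Longrightarrow> m \<le> n \<Longrightarrow> epsp n m k = (if k = m then 1 else if k = m - 1 then -1 else 0)"
  using w_ge2[of m] by (simp add: epsp_def)

lemma adj_iff: "1 \<le> m \<Longrightarrow> m + 1 \<le> n \<Longrightarrow> 2 \<le> m \<Longrightarrow> adj n m k \<longleftrightarrow> k = m + 1 \<or> k = m - 1"
  using wrap_plus1[of m n] w_ge2[of m] by (simp add: adj_def)

lemma F_comm_Elist: "m \<in> {1..n} \<Longrightarrow> set ks \<subseteq> {1..n} \<Longrightarrow> m \<notin> set ks \<Longrightarrow>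
    FT n r m * prod_list (map (ET n r) ks) = prod_list (map (ET n r) ks) * FT n r m"
proof (rule comm_prod_list)
  fix y assume a: "m \<in> {1..n}" "set ks \<subseteq> {1..n}" "m \<notin> set ks" "y \<in> set (map (ET n r) ks)"
  then obtain k where k: "k \<in> set ks" "y = ET n r k" by auto
  then have "k \<in> {1..n}" "k \<noteq> m" using a by auto
  then show "FT n r m * y = y * FT n r m" using rel_EF_diff[of k n m r] a k by auto
qed

lemma E_comm_Elist: "m \<in> {1..n} \<Longrightarrow> set ks \<subseteq> {1..n} \<Longrightarrow> (\<forall>k\<in>set ks. \<not> adj n m k) \<Longrightarrow>
    ET n r m * prod_list (map (ET n r) ks) = prod_list (map (ET n r) ks) * ET n r m"
proof (rule comm_prod_list)
  fix y assume a: "m \<in> {1..n}" "set ks \<subseteq> {1..n}" "\<forall>k\<in>set ks. \<not> adj n m k" "y \<in> set (map (ET n r) ks)"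
  then obtain k where k: "k \<in> set ks" "y = ET n r k" by auto
  then have "k \<in> {1..n}" "\<not> adj n m k" using a by auto
  then show "ET n r m * y = y * ET n r m" using rel_EE[of m n k r] a k by auto
qed

lemma KFE_comm: "k \<in> {1..n} \<Longrightarrow> j \<in> {1..n} \<Longrightarrow> KT n r k * (FT n r j * ET n r j) = (FT n r j * ET n r j) * KT n r k"
proof -
  assume a: "k \<in> {1..n}" "j \<in> {1..n}"
  have "KT n r k * (FT n r j * ET n r j) = scaleT (vpow (- epsp n k j)) (FT n r j * (KT n r k * ET n r j))"
    using rel_KF[OF a, of r] by (simp add: mult.assoc[symmetric] scaleT_mult_left)
  also have "\<dots> = scaleT (vpow (- epsp n k j) * vpow (epsp n k j)) (FT n r j * ET n r j * KT n r k)"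
    using rel_KE[OF a, of r] by (simp add: scaleT_mult_right mult.assoc)
  also have "vpow (- epsp n k j) * vpow (epsp n k j) = 1"
    by (simp add: vpow_minus vpow_nz)
  finally show ?thesis by simp
qed

lemma KiFE_comm: "k \<in> {1..n} \<Longrightarrow> j \<in> {1..n} \<Longrightarrow> KiT n r k * (FT n r j * ET n r j) = (FT n r j * ET n r j) * KiT n r k"
proof -
  assume a: "k \<in> {1..n}" "j \<in> {1..n}"
  define X where "X = FT n r j * ET n r j"
  have eX: "X * eT n r = X" unfolding X_def by (simp add: mult.assoc gen_corner[OF r3 rn])
  have eX2: "eT n r * X = X" unfolding X_def by (simp add: mult.assoc[symmetric] gen_corner[OF r3 rn])
  have "KiT n r k * X = KiT n r k * X * (KT n r k * KiT n r k)"
    using rel_KKi[of k n r] a eX by (simp add: mult.assoc)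
  also have "\<dots> = KiT n r k * (KT n r k * X) * KiT n r k"
    using KFE_comm[OF a] unfolding X_def by (simp add: mult.assoc)
  also have "\<dots> = X * KiT n r k"
    using rel_KiK[of k n r] a eX2 by (simp add: mult.assoc[symmetric])
  finally show ?thesis unfolding X_def .
qed

lemma PT_FE_comm: "j \<in> {1..n} \<Longrightarrow> PT n r * (FT n r j * ET n r j) = (FT n r j * ET n r j) * PT n r"
proof -
  assume j: "j \<in> {1..n}"
  have "(FT n r j * ET n r j) * prod_list (map (fK n r) [1..<r+1]) = prod_list (map (fK n r) [1..<r+1]) * (FT n r j * ET n r j)"
  proof (rule comm_prod_list)
    fix y assume "y \<in> set (map (fK n r) [1..<r+1])"
    then obtain k where k: "k \<in> set [1..<r+1]" "y = fK n r k" by auto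
    then have kn: "k \<in> {1..n}" using rn by (auto simp del: upt_Suc)
    show "FT n r j * ET n r j * y = y * (FT n r j * ET n r j)"
      unfolding k fK_def[OF r3 rn]
      using KFE_comm[OF kn j] KiFE_comm[OF kn j]
      by (simp add: scaleT_mult_left scaleT_mult_right left_diff_distrib right_diff_distrib)
  qed
  then show ?thesis unfolding PT_def[OF r3 rn] by (metis e_central mult.assoc)
qed

lemma scaleT_m1: "scaleT (-1) x = - x"
proof -
  have "scaleT (-1) x + scaleT 1 x = scaleT 0 x" using scaleT_add_left[of "-1" 1 x] by simp
  then have "scaleT (-1) x + x = 0" by simp
  then show ?thesis by (metis eq_neg_iff_add_eq_0)
qed

lemma main_T:
  assumes i1: "1 < i" and ir: "i < r"
  defines "MT \<equiv> prod_list (map (ET n r) (rev [1..<r])) * prod_list (map (ET n r) [r+1..<n+1]) * PT n r"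
  shows "FT n r (i - 1) * ET n r (i - 1) * MT = MT * (FT n r i * ET n r i)"
proof -
  define lo where "lo = rev [1..<i-1]"
  define hi where "hi = rev [i+1..<r]"
  define Yl where "Yl = [r+1..<n+1]"
  define Alo where "Alo = prod_list (map (ET n r) lo)"
  define Ahi where "Ahi = prod_list (map (ET n r) hi)"
  define Y where "Y = prod_list (map (ET n r) Yl)"
  define P where "P = PT n r"
  have PE: "prod_list (map (ET n r) (xs @ ys)) = prod_list (map (ET n r) xs) * prod_list (map (ET n r) ys)" for xs ys
    by simp
  have sl: "sum_list (map f (rev xs)) = sum_list (map f xs)" for f :: "nat \<Rightarrow> int" and xs
    by (simp add: rev_map[symmetric] sum_list_rev)
  have upr: "[1..<r] = [1..<i-1] @ [i-1, i] @ [i+1..<r]"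
  proof -
    have "[1..<r] = [1..<i-1] @ [i-1..<r]" using i1 ir upt_add_eq_append[of 1 "i-1" "r - (i-1)"] by simp
    also have "[i-1..<r] = [i-1, i] @ [i+1..<r]" using i1 ir by (simp add: upt_conv_Cons)
    finally show ?thesis .
  qed
  have A: "prod_list (map (ET n r) (rev [1..<r])) = Ahi * ET n r i * ET n r (i-1) * Alo"
    unfolding upr Ahi_def Alo_def hi_def lo_def by (simp add: mult.assoc)
  have MT: "MT = Ahi * ET n r i * ET n r (i-1) * Alo * Y * P"
    unfolding MT_def A Y_def Yl_def P_def ..
  have ranges: "set lo \<subseteq> {1..n}" "set hi \<subseteq> {1..n}" "set Yl \<subseteq> {1..n}"
    using ir rn unfolding lo_def hi_def Yl_def by auto
  have i_n: "i - 1 \<in> {1..n}" "i \<in> {1..n}" "i + 1 \<in> {1..n}" "i - 1 \<in> {1..r}" "i \<in> {1..r}" "i + 1 \<in> {1..r}"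
    using i1 ir rn by auto
  have s_im1_loY: "sum_list (map (epsp n (i-1)) (lo @ Yl)) = -1"
  proof (cases "i = 2")
    case True
    have e1n: "epsp n (Suc 0) n = -1" using w_1 rn r3 by (simp add: epsp_def)
    show ?thesis unfolding lo_def Yl_def using True sum_epsp_upt1 rn r3 e1n by simp
  next
    case False
    then have h: "2 \<le> i - 1" "i - 1 \<le> n" using i1 ir rn by simp_all
    then show ?thesis unfolding lo_def Yl_def map_append sum_list_append sl sum_epsp_upt2[OF h]
      using ir rn by (simp; linarith)
  qed
  have s_im1_all: "sum_list (map (epsp n (i-1)) (hi @ [i, i-1] @ lo @ Yl)) = 0"
  proof (cases "i = 2")
    case True then show ?thesis unfolding lo_def Yl_def hi_def using sum_epsp_upt1 rn ir
      using w_1 by (simp add: sl epsp_def)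
  next
    case False
    then have h: "2 \<le> i - 1" "i - 1 \<le> n" using i1 ir rn by simp_all
    then show ?thesis unfolding lo_def Yl_def hi_def map_append sum_list_append sl sum_epsp_upt2[OF h] list.map sum_list.Cons epsp2[OF h]
      using ir rn by (simp; linarith)
  qed
  have hi2: "2 \<le> i" "i \<le> n" using i1 ir rn by simp_all
  have hip: "2 \<le> i + 1" "i + 1 \<le> n" using i1 ir rn by simp_all
  have s_i_all: "sum_list (map (epsp n i) (hi @ [i, i-1] @ lo @ Yl)) = 0"
    unfolding lo_def Yl_def hi_def map_append sum_list_append sl sum_epsp_upt2[OF hi2] list.map sum_list.Cons sum_list.Nil epsp2[OF hi2]
    using ir rn i1 by (simp; linarith)
  have s_i_loY: "sum_list (map (epsp n i) (lo @ Yl)) = 0"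
    unfolding lo_def Yl_def map_append sum_list_append sl sum_epsp_upt2[OF hi2]
    using ir rn i1 by (simp; linarith)
  have s_ip1_V2: "sum_list (map (epsp n (i+1)) ([i, i-1] @ lo @ Yl @ [i])) = -2"
    unfolding lo_def Yl_def map_append sum_list_append sl sum_epsp_upt2[OF hip] list.map sum_list.Cons sum_list.Nil epsp2[OF hip]
    using ir rn i1 by (simp; linarith)
  have s_i_V3: "sum_list (map (epsp n i) ([i-1] @ lo @ Yl @ [i])) = 0"
    unfolding lo_def Yl_def map_append sum_list_append sl sum_epsp_upt2[OF hi2] list.map sum_list.Cons sum_list.Nil epsp2[OF hi2]
    using ir rn i1 by (simp; linarith)
  have s_ip1_V3: "sum_list (map (epsp n (i+1)) ([i-1] @ lo @ Yl @ [i])) = -1"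
    unfolding lo_def Yl_def map_append sum_list_append sl sum_epsp_upt2[OF hip] list.map sum_list.Cons sum_list.Nil epsp2[OF hip]
    using ir rn i1 by (simp; linarith)
  have im1: "i - 1 + 1 = i" using i1 by simp
  have cP: "eT n r * P = P" unfolding P_def by (rule PT_corner[OF r3 rn])
  have ccv: "cc * (vv - inverse vv) = 1" by (rule cc_mult)
  have rng_all: "set (hi @ [i, i-1] @ lo @ Yl) \<subseteq> {1..n}" using ranges i_n by auto
  have rng_loY: "set (lo @ Yl) \<subseteq> {1..n}" using ranges by auto
  have rng_V3: "set ([i-1] @ lo @ Yl @ [i]) \<subseteq> {1..n}" using ranges i_n by auto
  have rng_V2: "set ([i, i-1] @ lo @ Yl @ [i]) \<subseteq> {1..n}" using ranges i_n by auto
  have MT2: "MT = prod_list (map (ET n r) (hi @ [i, i-1] @ lo @ Yl)) * P"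
    unfolding MT Ahi_def Alo_def Y_def by (simp add: mult.assoc)
  have loY: "Alo * Y = prod_list (map (ET n r) (lo @ Yl))"
    unfolding Alo_def Y_def by simp
  have HMT: "HH (i-1) * MT = 0"
  proof -
    have "HH (i-1) * MT = scaleT (cc * (vpow (0 - 0) - vpow (0 - 0))) MT"
      using H_list[of "i-1" "hi @ [i, i-1] @ lo @ Yl"] i_n rng_all s_im1_all s_i_all
      unfolding MT2 P_def im1 by simp
    then show ?thesis by simp
  qed
  have V1: "Alo * Y * (FT n r (i-1) * P) = 0"
  proof -
    define W where "W = Alo * Y * (FT n r (i-1) * P)"
    have "KT n r (i-1) * W = scaleT (vpow (-1)) (Alo * Y * (KT n r (i-1) * (FT n r (i-1) * P)))"
      unfolding W_def loY using K_Elist[OF i_n(1) rng_loY] s_im1_loY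
      by (simp add: mult.assoc[symmetric] scaleT_mult_left)
    also have "KT n r (i-1) * (FT n r (i-1) * P) = scaleT (vpow (-1)) (FT n r (i-1) * (KT n r (i-1) * P))"
      using rel_KF[OF i_n(1) i_n(1), of r] by (simp add: epsp_def mult.assoc[symmetric] scaleT_mult_left)
    also have "KT n r (i-1) * P = scaleT vv P"
      unfolding P_def by (rule K_eig_PT[OF r3 rn i_n(4)])
    moreover have sc: "vv * (inverse vv * inverse vv) = inverse vv" by (simp add: field_simps)
    ultimately have k: "KT n r (i-1) * W = scaleT (inverse vv) W"
      unfolding W_def by (simp add: scaleT_mult_right mult.commute mult.left_commute sc)
    have "eT n r * W = W"
      unfolding W_def using cP by (metis e_central mult.assoc)
    then show ?thesis using vanish[OF r3 rn i_n(1) _ k] unfolding W_def by blast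
  qed
  have HloY: "HH (i-1) * (Alo * Y * P) = - (Alo * Y * P)"
  proof -
    have "HH (i-1) * (Alo * Y * P) = scaleT (cc * (vpow (-1 - 0) - vpow (0 - -1))) (Alo * Y * P)"
      using H_list[of "i-1" "lo @ Yl"] i_n rng_loY s_im1_loY s_i_loY
      unfolding loY P_def im1 by simp
    also have "cc * (vpow (-1 - 0) - vpow (0 - -1)) = - 1"
      using ccv by (simp add: algebra_simps)
    finally show ?thesis by (simp add: scaleT_m1)
  qed
  have FMT: "FT n r (i-1) * MT = Ahi * ET n r i * Alo * Y * P"
  proof -
    have c1: "FT n r (i-1) * Ahi = Ahi * FT n r (i-1)"
      unfolding Ahi_def using ranges(2) i_n by (intro F_comm_Elist) (auto simp: hi_def)
    have c2: "FT n r (i-1) * ET n r i = ET n r i * FT n r (i-1)"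
      using rel_EF_diff[of i n "i-1" r] i_n by simp
    have c3: "FT n r (i-1) * (Alo * Y) = (Alo * Y) * FT n r (i-1)"
      unfolding loY using rng_loY i_n by (intro F_comm_Elist) (auto simp: lo_def Yl_def)
    have "FT n r (i-1) * MT = (FT n r (i-1) * Ahi) * ET n r i * ET n r (i-1) * Alo * Y * P"
      unfolding MT by (simp add: mult.assoc)
    also have "\<dots> = Ahi * (FT n r (i-1) * ET n r i) * ET n r (i-1) * Alo * Y * P"
      unfolding c1 by (simp add: mult.assoc)
    also have "\<dots> = Ahi * ET n r i * (FT n r (i-1) * ET n r (i-1)) * (Alo * Y * P)"
      unfolding c2 by (simp add: mult.assoc)
    also have "\<dots> = Ahi * ET n r i * (ET n r (i-1) * (FT n r (i-1) * (Alo * Y * P)) - HH (i-1) * (Alo * Y * P))"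
      using FE_same[of "i-1"] i_n im1 by (simp add: mult.assoc left_diff_distrib)
    also have "FT n r (i-1) * (Alo * Y * P) = Alo * Y * (FT n r (i-1) * P)"
      using c3 by (metis mult.assoc)
    finally show ?thesis using V1 HloY by (simp add: mult.assoc)
  qed
  have LHS: "FT n r (i - 1) * ET n r (i - 1) * MT = ET n r (i-1) * Ahi * ET n r i * Alo * Y * P"
  proof -
    have "FT n r (i - 1) * ET n r (i - 1) * MT = ET n r (i-1) * (FT n r (i-1) * MT) - HH (i-1) * MT"
      using FE_same[of "i-1"] i_n im1 by (simp add: mult.assoc left_diff_distrib)
    then show ?thesis using FMT HMT by (simp add: mult.assoc)
  qed
  have V2: "ET n r i * (ET n r (i-1) * Alo * Y * ET n r i * P) = 0"
  proof -
    have "ET n r i * (ET n r (i-1) * Alo * Y * ET n r i * P) = prod_list (map (ET n r) ([i, i-1] @ lo @ Yl @ [i])) * P"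
      unfolding Alo_def Y_def by (simp add: mult.assoc)
    also have "\<dots> = 0" unfolding P_def by (rule vanish_list[OF i_n(6) rng_V2 s_ip1_V2])
    finally show ?thesis .
  qed
  have HV3: "HH i * (ET n r (i-1) * Alo * Y * ET n r i * P) = ET n r (i-1) * Alo * Y * ET n r i * P"
  proof -
    have eq: "ET n r (i-1) * Alo * Y * ET n r i * P = prod_list (map (ET n r) ([i-1] @ lo @ Yl @ [i])) * P"
      unfolding Alo_def Y_def by (simp add: mult.assoc)
    have "HH i * (prod_list (map (ET n r) ([i-1] @ lo @ Yl @ [i])) * P) =
       scaleT (cc * (vpow (0 - -1) - vpow (-1 - 0))) (prod_list (map (ET n r) ([i-1] @ lo @ Yl @ [i])) * P)"
      using H_list[of i "[i-1] @ lo @ Yl @ [i]"] i_n rng_V3 s_i_V3 s_ip1_V3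
      unfolding P_def by simp
    also have "cc * (vpow (0 - -1) - vpow (-1 - 0)) = 1"
      using ccv by simp
    finally show ?thesis unfolding eq by simp
  qed
  have RHS: "MT * (FT n r i * ET n r i) = Ahi * ET n r (i-1) * Alo * Y * ET n r i * P"
  proof -
    have c1: "P * (FT n r i * ET n r i) = (FT n r i * ET n r i) * P"
      unfolding P_def by (rule PT_FE_comm[OF i_n(2)])
    have c2: "ET n r (i-1) * Alo * Y * FT n r i = FT n r i * (ET n r (i-1) * Alo * Y)"
    proof -
      have "ET n r (i-1) * Alo * Y = prod_list (map (ET n r) ([i-1] @ lo @ Yl))"
        unfolding Alo_def Y_def by (simp add: mult.assoc)
      moreover have "FT n r i * prod_list (map (ET n r) ([i-1] @ lo @ Yl)) = prod_list (map (ET n r) ([i-1] @ lo @ Yl)) * FT n r i"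
        using ranges i_n i1 by (intro F_comm_Elist) (auto simp: lo_def Yl_def)
      ultimately show ?thesis by simp
    qed
    have "MT * (FT n r i * ET n r i) = Ahi * ET n r i * (ET n r (i-1) * Alo * Y * FT n r i) * (ET n r i * P)"
      unfolding MT by (simp add: mult.assoc c1)
    also have "\<dots> = Ahi * (ET n r i * FT n r i) * (ET n r (i-1) * Alo * Y * ET n r i * P)"
      unfolding c2 by (simp add: mult.assoc)
    also have "\<dots> = Ahi * FT n r i * (ET n r i * (ET n r (i-1) * Alo * Y * ET n r i * P)) +
                    Ahi * (HH i * (ET n r (i-1) * Alo * Y * ET n r i * P))"
      using EF_same[of i] i_n by (simp add: mult.assoc distrib_left distrib_right)
    also have "\<dots> = Ahi * (ET n r (i-1) * Alo * Y * ET n r i * P)"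
      unfolding V2 HV3 by simp
    finally show ?thesis by (simp add: mult.assoc)
  qed
  have cA: "ET n r (i-1) * Ahi = Ahi * ET n r (i-1)"
  proof -
    have "\<forall>k\<in>set hi. \<not> adj n (i-1) k"
    proof
      fix k assume k: "k \<in> set hi"
      then have k': "i + 1 \<le> k" "k < r" unfolding hi_def by auto
      have "wrap n (int (i-1) + 1) = i" using wrap_plus1[of "i-1" n] i_n im1 by simp
      moreover have "wrap n (int (i-1) - 1) \<noteq> k"
      proof (cases "i = 2")
        case True then show ?thesis using w_1 k' rn by simp
      next
        case False then show ?thesis using w_ge2[of "i-1"] k' i1 ir rn by simp
      qed
      ultimately show "\<not> adj n (i-1) k" using k' by (auto simp: adj_def)
    qed
    then show ?thesis unfolding Ahi_def using ranges(2) i_n by (intro E_comm_Elist) auto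
  qed
  have cB: "Alo * Y * ET n r i = ET n r i * (Alo * Y)"
  proof -
    have "\<forall>k\<in>set (lo @ Yl). \<not> adj n i k"
      using adj_iff[of i] i_n i1 ir rn by (auto simp: lo_def Yl_def)
    then have "ET n r i * prod_list (map (ET n r) (lo @ Yl)) = prod_list (map (ET n r) (lo @ Yl)) * ET n r i"
      using rng_loY i_n by (intro E_comm_Elist) auto
    then show ?thesis unfolding loY by simp
  qed
  have "Ahi * ET n r (i-1) * Alo * Y * ET n r i * P = Ahi * ET n r (i-1) * (Alo * Y * ET n r i) * P"
    by (simp only: mult.assoc)
  also have "\<dots> = ET n r (i-1) * Ahi * ET n r i * Alo * Y * P"
    unfolding cB cA by (simp only: mult.assoc)
  finally show ?thesis unfolding LHS RHS by simp
qed

end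


lemma monoF_nil: "monoF [] = 1"
  by (metis Rep_fs_inverse Rep_fs_one tr_mono)

lemma concat_single: "(\<And>x. x \<in> set xs \<Longrightarrow> f x = [g x]) \<Longrightarrow> concat (map f xs) = map g xs"
  by (induction xs) auto

lemma one_lam_omega: "r \<le> n \<Longrightarrow> one_lam n (omega r) = fa_prod (map (\<lambda>k. one_factor k 1) [1..<r+1])"
proof -
  assume rn: "r \<le> n"
  have sp: "[1..<n+1] = [1..<r+1] @ [r+1..<n+1]"
    using rn upt_add_eq_append[of 1 "r+1" "n - r"] by simp
  have h1: "concat (map (\<lambda>i. map (one_factor i) [1..<omega r i + 1]) [1..<r+1]) = map (\<lambda>k. one_factor k 1) [1..<r+1]"
    by (rule concat_single) (auto simp: omega_def)
  have h2: "concat (map (\<lambda>i. map (one_factor i) [1..<omega r i + 1]) [r+1..<n+1]) = []"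
    by (auto simp: omega_def simp del: upt_Suc)
  show ?thesis unfolding one_lam_def sp map_append concat_append h1 h2 append_Nil2 ..
qed

lemma one_factor_1: "one_factor k 1 = fa_smult cc (fa_diff (fa_smult 1 (Kg k)) (fa_smult 1 (Kig k)))"
  by (simp add: one_factor_def cc_def)

theorem lemma2p3p6:
  fixes n r i :: nat
  assumes "r \<ge> 3" and "n > r" and "1 < i" and "i < r"
  defines "M \<equiv> fa_mult (fa_mult (fa_prod (map Eg (rev [1..<r]))) (fa_prod (map Eg [r+1..<n+1])))
                      (one_lam n (omega r))"
  shows "T_eq n r
           (fa_mult (fa_diff (fa_smult vv (fa_mult (Fg (i - 1)) (Eg (i - 1)))) (fa_mono [])) M)
           (fa_mult M (fa_diff (fa_smult vv (fa_mult (Fg i) (Eg i))) (fa_mono [])))"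
proof -
  note r3 = assms(1) and rn = assms(2)
  define MT where "MT = prod_list (map (ET n r) (rev [1..<r])) * prod_list (map (ET n r) [r+1..<n+1]) * PT n r"
  have main: "FT n r (i - 1) * ET n r (i - 1) * MT = MT * (FT n r i * ET n r i)"
    unfolding MT_def by (rule main_T[OF r3 rn assms(3,4)])
  define Mfs where "Mfs = (prod_list (map (\<lambda>j. monoF [GE j]) (rev [1..<r])) * prod_list (map (\<lambda>j. monoF [GE j]) [r+1..<n+1])
      * prod_list (map (\<lambda>k. scaleF cc (scaleF 1 (monoF [GK k]) - scaleF 1 (monoF [GKi k]))) [1..<r+1]))"
  have M0: "M = Rep_fs (prod_list (map (\<lambda>j. monoF [GE j]) (rev [1..<r])) * prod_list (map (\<lambda>j. monoF [GE j]) [r+1..<n+1])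
      * prod_list (map (\<lambda>k. scaleF cc (scaleF 1 (monoF [GK k]) - scaleF 1 (monoF [GKi k]))) [1..<r+1]))"
    unfolding M_def one_lam_omega[OF less_imp_le[OF rn]] one_factor_1 by (simp only: tr)
  have PTeq: "eT n r * prod_list (map (\<lambda>k. scaleT cc (scaleT 1 (KT n r k) - scaleT 1 (KiT n r k))) [1..<r+1]) = PT n r"
    unfolding PT_def[OF r3 rn] fK_def[OF r3 rn] by simp
  have M: "M = Rep_fs Mfs" using M0 unfolding Mfs_def .
  have iM0: "\<iota> n r (prod_list (map (\<lambda>j. monoF [GE j]) (rev [1..<r])) * prod_list (map (\<lambda>j. monoF [GE j]) [r+1..<n+1])
      * prod_list (map (\<lambda>k. scaleF cc (scaleF 1 (monoF [GK k]) - scaleF 1 (monoF [GKi k]))) [1..<r+1])) = MT"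
  proof -
    have "\<iota> n r (prod_list (map (\<lambda>j. monoF [GE j]) (rev [1..<r])) * prod_list (map (\<lambda>j. monoF [GE j]) [r+1..<n+1])
      * prod_list (map (\<lambda>k. scaleF cc (scaleF 1 (monoF [GK k]) - scaleF 1 (monoF [GKi k]))) [1..<r+1]))
      = eT n r * prod_list (map (ET n r) (rev [1..<r])) * (eT n r * prod_list (map (ET n r) [r+1..<n+1])) * PT n r"
      by (simp only: iota_simps PTeq[symmetric] comp_def)
    also have "\<dots> = MT"
      unfolding MT_def using PT_corner[OF r3 rn]
      by (metis (no_types, lifting) e_central e_idem mult.assoc)
    finally show ?thesis .
  qed
  have iM: "\<iota> n r Mfs = MT" using iM0 unfolding Mfs_def .
  have cM: "eT n r * MT = MT" "MT * eT n r = MT"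
    unfolding MT_def using PT_corner[OF r3 rn] by (metis e_central mult.assoc)+
  show ?thesis
    unfolding M
    apply (simp only: tr T_eq_iota)
    apply (simp only: iota_simps iM monoF_nil)
    apply (simp add: monoF_nil left_diff_distrib right_diff_distrib scaleT_mult_left scaleT_mult_right cM)
    using main by (simp add: mult.assoc)
qed


end
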